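(* With the notation and hypotheses of the preceding setting (a P-closed set $\Omega$ with P-basis $\mathcal{A}$, pairwise non-conjugate $a^{(1)},\dots,a^{(\ell)}$ with $\mathcal{A}=\bigcup_i(\mathcal{A}\cap C(a^{(i)}))$, each $\mathcal{A}_i=\mathcal{A}\cap C(a^{(i)})=\{a^{(i)}_1,\dots,a^{(i)}_{n_i}\}$ non-empty, $a^{(i)}_j=\mathcal{D}_{a^{(i)}}(\alpha^{(i)}_j)(\alpha^{(i)}_j)^{-1}$, $n=n_1+\dots+n_\ell$, and $\phi_\mathcal{A}:\mathbb{F}^\mathcal{A}\to\mathbb{F}^n$ given by $\phi_\mathcal{A}(E_\mathcal{A}(F))=\big(F^{\mathcal{D}_{a^{(i)}}}(\alpha^{(i)}_j)\big)_{i,j}$ for $F\in\mathbb{F}[x;\sigma,\delta]_n$), let $K_i=K_{a^{(i)}}$. Then the function $\mathrm{wt}:\mathbb{F}^n\to\mathbb{N}$, $\mathrm{wt}(\phi_\mathcal{A}(f))=\mathrm{wt}_\mathcal{A}(f)$ for $f\in\mathbb{F}^\mathcal{A}$, equals the sum-rank weight on $\mathbb{F}^n$ with lengths $(n_1,\dots,n_\ell)$ and division subrings $(K_1,\dots,K_\ell)$.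
   Context: $\mathbb{F}$ is a division ring, $\sigma$ a ring endomorphism, $\delta$ a $\sigma$-derivation; $\mathbb{F}[x;\sigma,\delta]$ the skew polynomial ring ($xa=\sigma(a)x+\delta(a)$); evaluation $F(a)$ defined by $F-F(a)\in\mathbb{F}[x;\sigma,\delta](x-a)$, $E_\mathcal{A}(F)=(a\mapsto F(a))$. P-closure, P-closed, P-independent, P-basis and $\mathrm{Rk}$ as usual ($\overline\Omega$ = common zeros of all skew polynomials vanishing on $\Omega$; P-basis = P-independent subset with P-closure $\Omega$; $\mathrm{Rk}$ = size of a P-basis); $E_\mathcal{A}$ is a bijection from polynomials of degree $<n$ onto $\mathbb{F}^\mathcal{A}$, and $\phi_\mathcal{A}$ is a left linear isomorphism. Skew weight: $\mathrm{wt}_\mathcal{A}(E_\mathcal{A}(F))=n-\mathrm{Rk}(Z(F)\cap\Omega)$. $\mathcal{D}_a(b)=\sigma(b)a+\delta(b)$, $F^{\mathcal{D}_a}(b)=\sum_iF_i\mathcal{D}_a^i(b)$ for $F=\sum F_ix^i$, $K_a=\{b:\mathcal{D}_a(b)=ab\}$, $C(a)=\{\mathcal{D}_a(b)b^{-1}:b\neq0\}$. Sum-rank weight: for division subrings $K_1,\dots,K_\ell$ and $\mathbf{c}=(\mathbf{c}^{(1)},\dots,\mathbf{c}^{(\ell)})$ with $\mathbf{c}^{(i)}\in\mathbb{F}^{n_i}$, $\mathrm{wt_{SR}}(\mathbf{c})=\sum_i\dim_{K_i}\langle c^{(i)}_1,\dots,c^{(i)}_{n_i}\rangle^R_{K_i}$,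 where $\langle\cdot\rangle^R_{K}$ is the right $K$-span. *)

theory Defs
  imports Main
begin

text \<open>Skew polynomials over a division ring, represented by their coefficient
  function nat => 'a with finite support; F k is the coefficient of x^k.\<close>

definition spoly :: "(nat \<Rightarrow> 'a::zero) \<Rightarrow> bool" where
  "spoly F \<longleftrightarrow> finite {k. F k \<noteq> 0}"

definition ring_endo :: "('a::ring_1 \<Rightarrow> 'a) \<Rightarrow> bool" where
  "ring_endo \<sigma> \<longleftrightarrow> (\<forall>x y. \<sigma> (x + y) = \<sigma> x + \<sigma> y) \<and> (\<forall>x y. \<sigma> (x * y) = \<sigma> x * \<sigma> y) \<and> \<sigma> 1 = 1"

definition sigma_derivation :: "('a::ring_1 \<Rightarrow> 'a) \<Rightarrow> ('a \<Rightarrow> 'a) \<Rightarrow> bool" where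
  "sigma_derivation \<sigma> \<delta> \<longleftrightarrow> (\<forall>x y. \<delta> (x + y) = \<delta> x + \<delta> y) \<and>
     (\<forall>x y. \<delta> (x * y) = \<sigma> x * \<delta> y + \<delta> x * y)"

text \<open>Left multiplication by x, using  x b = sigma(b) x + delta(b).\<close>
definition xmul :: "('a::ring_1 \<Rightarrow> 'a) \<Rightarrow> ('a \<Rightarrow> 'a) \<Rightarrow> (nat \<Rightarrow> 'a) \<Rightarrow> (nat \<Rightarrow> 'a)" where
  "xmul \<sigma> \<delta> G = (\<lambda>j. (if j = 0 then 0 else \<sigma> (G (j - 1))) + \<delta> (G j))"

text \<open>Product in F[x;sigma,delta]:  (sum_i F_i x^i) G = sum_i F_i (x^i G).\<close>
definition skew_mult :: "('a::ring_1 \<Rightarrow> 'a) \<Rightarrow> ('a \<Rightarrow> 'a) \<Rightarrow> (nat \<Rightarrow> 'a) \<Rightarrow> (nat \<Rightarrow> 'a) \<Rightarrow> (nat \<Rightarrow> 'a)" where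
  "skew_mult \<sigma> \<delta> F G = (\<lambda>k. \<Sum>i\<in>{i. F i \<noteq> 0}. F i * ((xmul \<sigma> \<delta> ^^ i) G) k)"

definition x_minus :: "'a::ring_1 \<Rightarrow> (nat \<Rightarrow> 'a)" where
  "x_minus a = (\<lambda>k. if k = 0 then - a else if k = 1 then 1 else 0)"

definition skew_eval :: "('a::ring_1 \<Rightarrow> 'a) \<Rightarrow> ('a \<Rightarrow> 'a) \<Rightarrow> (nat \<Rightarrow> 'a) \<Rightarrow> 'a \<Rightarrow> 'a" where
  "skew_eval \<sigma> \<delta> F a = (THE c. \<exists>G. spoly G \<and>
      (\<lambda>k. F k - (if k = 0 then c else 0)) = skew_mult \<sigma> \<delta> G (x_minus a))"

definition skew_zeros :: "('a::ring_1 \<Rightarrow> 'a) \<Rightarrow> ('a \<Rightarrow> 'a) \<Rightarrow> (nat \<Rightarrow> 'a) \<Rightarrow> 'a set" where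
  "skew_zeros \<sigma> \<delta> F = {a. skew_eval \<sigma> \<delta> F a = 0}"

definition P_closure :: "('a::ring_1 \<Rightarrow> 'a) \<Rightarrow> ('a \<Rightarrow> 'a) \<Rightarrow> 'a set \<Rightarrow> 'a set" where
  "P_closure \<sigma> \<delta> \<Omega> = {a. \<forall>F. spoly F \<and> (\<forall>b\<in>\<Omega>. skew_eval \<sigma> \<delta> F b = 0) \<longrightarrow> skew_eval \<sigma> \<delta> F a = 0}"

definition P_closed :: "('a::ring_1 \<Rightarrow> 'a) \<Rightarrow> ('a \<Rightarrow> 'a) \<Rightarrow> 'a set \<Rightarrow> bool" where
  "P_closed \<sigma> \<delta> \<Omega> \<longleftrightarrow> P_closure \<sigma> \<delta> \<Omega> = \<Omega>"

definition P_independent :: "('a::ring_1 \<Rightarrow> 'a) \<Rightarrow> ('a \<Rightarrow> 'a) \<Rightarrow> 'a set \<Rightarrow> bool" where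
  "P_independent \<sigma> \<delta> B \<longleftrightarrow> (\<forall>b\<in>B. b \<notin> P_closure \<sigma> \<delta> (B - {b}))"

definition P_basis :: "('a::ring_1 \<Rightarrow> 'a) \<Rightarrow> ('a \<Rightarrow> 'a) \<Rightarrow> 'a set \<Rightarrow> 'a set \<Rightarrow> bool" where
  "P_basis \<sigma> \<delta> B \<Omega> \<longleftrightarrow> B \<subseteq> \<Omega> \<and> P_independent \<sigma> \<delta> B \<and> P_closure \<sigma> \<delta> B = \<Omega>"

definition Rk :: "('a::ring_1 \<Rightarrow> 'a) \<Rightarrow> ('a \<Rightarrow> 'a) \<Rightarrow> 'a set \<Rightarrow> nat" where
  "Rk \<sigma> \<delta> \<Omega> = card (SOME B. P_basis \<sigma> \<delta> B \<Omega>)"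

definition skew_wt :: "('a::ring_1 \<Rightarrow> 'a) \<Rightarrow> ('a \<Rightarrow> 'a) \<Rightarrow> 'a set \<Rightarrow> nat \<Rightarrow> (nat \<Rightarrow> 'a) \<Rightarrow> nat" where
  "skew_wt \<sigma> \<delta> \<Omega> n F = n - Rk \<sigma> \<delta> (skew_zeros \<sigma> \<delta> F \<inter> \<Omega>)"

definition Dop :: "('a::ring_1 \<Rightarrow> 'a) \<Rightarrow> ('a \<Rightarrow> 'a) \<Rightarrow> 'a \<Rightarrow> 'a \<Rightarrow> 'a" where
  "Dop \<sigma> \<delta> a b = \<sigma> b * a + \<delta> b"

definition D_eval :: "('a::ring_1 \<Rightarrow> 'a) \<Rightarrow> ('a \<Rightarrow> 'a) \<Rightarrow> (nat \<Rightarrow> 'a) \<Rightarrow> 'a \<Rightarrow> 'a \<Rightarrow> 'a" where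
  "D_eval \<sigma> \<delta> F a b = (\<Sum>i\<in>{i. F i \<noteq> 0}. F i * (Dop \<sigma> \<delta> a ^^ i) b)"

definition Kcent :: "('a::ring_1 \<Rightarrow> 'a) \<Rightarrow> ('a \<Rightarrow> 'a) \<Rightarrow> 'a \<Rightarrow> 'a set" where
  "Kcent \<sigma> \<delta> a = {b. Dop \<sigma> \<delta> a b = a * b}"

definition conj_class :: "('a::division_ring \<Rightarrow> 'a) \<Rightarrow> ('a \<Rightarrow> 'a) \<Rightarrow> 'a \<Rightarrow> 'a set" where
  "conj_class \<sigma> \<delta> a = {Dop \<sigma> \<delta> a b * inverse b | b. b \<noteq> 0}"

definition right_span :: "'a::ring_1 set \<Rightarrow> 'a set \<Rightarrow> 'a set" where
  "right_span K S = {x. \<exists>T coef. finite T \<and> T \<subseteq> S \<and> (\<forall>t\<in>T. coef t \<in> K) \<and> x = (\<Sum>t\<in>T. t * coef t)}"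

definition right_indep :: "'a::ring_1 set \<Rightarrow> 'a set \<Rightarrow> bool" where
  "right_indep K B \<longleftrightarrow> (\<forall>T coef. finite T \<and> T \<subseteq> B \<and> (\<forall>t\<in>T. coef t \<in> K) \<and> (\<Sum>t\<in>T. t * coef t) = 0
      \<longrightarrow> (\<forall>t\<in>T. coef t = 0))"

definition right_dim :: "'a::ring_1 set \<Rightarrow> 'a set \<Rightarrow> nat" where
  "right_dim K V = card (SOME B. B \<subseteq> V \<and> right_indep K B \<and> right_span K B = V)"

text \<open>Sum-rank weight of c = (c^(1),...,c^(l)), c^(i) = (c i 0, ..., c i (nn i - 1)).\<close>
definition wt_SR :: "nat \<Rightarrow> (nat \<Rightarrow> nat) \<Rightarrow> (nat \<Rightarrow> 'a::ring_1 set) \<Rightarrow> (nat \<Rightarrow> nat \<Rightarrow> 'a) \<Rightarrow> nat" where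
  "wt_SR l nn K c = (\<Sum>i<l. right_dim (K i) (right_span (K i) {c i j | j. j < nn i}))"

end

theory Submission
  imports Defs
begin


definition divsub :: "'a::division_ring set \<Rightarrow> bool" where
 "divsub K \<longleftrightarrow> 0 \<in> K \<and> 1 \<in> K \<and> (\<forall>x\<in>K. \<forall>y\<in>K. x + y \<in> K \<and> x * y \<in> K) \<and> (\<forall>x\<in>K. - x \<in> K \<and> inverse x \<in> K)"

definition subsp :: "'a::ring_1 set \<Rightarrow> 'a set \<Rightarrow> bool" where
 "subsp K V \<longleftrightarrow> 0 \<in> V \<and> (\<forall>x\<in>V. \<forall>y\<in>V. x + y \<in> V) \<and> (\<forall>x\<in>V. \<forall>k\<in>K. x * k \<in> V)"

definition lin :: "'a::ring_1 set \<Rightarrow> ('a \<Rightarrow> 'a) \<Rightarrow> bool" where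
 "lin K L \<longleftrightarrow> (\<forall>x y. L (x + y) = L x + L y) \<and> (\<forall>x. \<forall>k\<in>K. L (x * k) = L x * k)"

definition relfree :: "'a::ring_1 set \<Rightarrow> ('a \<Rightarrow> 'a) \<Rightarrow> 'a set \<Rightarrow> bool" where
 "relfree K L D \<longleftrightarrow> (\<forall>T coef. finite T \<and> T \<subseteq> D \<and> (\<forall>t\<in>T. coef t \<in> K) \<and> (\<Sum>t\<in>T. L t * coef t) = 0 \<longrightarrow> (\<forall>t\<in>T. coef t = 0))"

lemma divsubD:
  assumes "divsub K"
  shows "0\<in>K" "1\<in>K" "x\<in>K \<Longrightarrow> y\<in>K \<Longrightarrow> x+y\<in>K" "x\<in>K \<Longrightarrow> y\<in>K \<Longrightarrow> x*y\<in>K"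
    "x\<in>K \<Longrightarrow> -x\<in>K" "x\<in>K \<Longrightarrow> inverse x\<in>K"
  using assms unfolding divsub_def by auto

lemma divsub_sum:
  assumes "divsub K" "\<And>t. t\<in>T \<Longrightarrow> f t \<in> K"
  shows "sum f T \<in> K"
  using assms(2)
proof (induction T rule: infinite_finite_induct)
  case (infinite A) then show ?case using divsubD(1)[OF assms(1)] by simp
next
  case empty then show ?case using divsubD(1)[OF assms(1)] by simp
next
  case (insert x F) then show ?case using divsubD(3)[OF assms(1)] by simp
qed

lemma subsp_sum:
  assumes "subsp K V" "finite T" "\<And>t. t\<in>T \<Longrightarrow> f t \<in> V"
  shows "sum f T \<in> V"
  using assms(2,3)
proof (induction T rule: finite_induct)
  case empty then show ?case using assms(1) unfolding subsp_def by simp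
next
  case (insert x F) then show ?case using assms(1) unfolding subsp_def by simp
qed

lemma subspD:
  assumes "subsp K V"
  shows "0 \<in> V" "x\<in>V \<Longrightarrow> y\<in>V \<Longrightarrow> x+y\<in>V" "x\<in>V \<Longrightarrow> k\<in>K \<Longrightarrow> x*k\<in>V"
  using assms unfolding subsp_def by auto

lemma subsp_neg:
  assumes "subsp K V" "divsub K" "x \<in> V"
  shows "- x \<in> V"
proof -
  have "x * (- 1) \<in> V" using subspD(3)[OF assms(1) assms(3)] divsubD(2,5)[OF assms(2)] by blast
  then show ?thesis by simp
qed

lemma subsp_diff:
  assumes "subsp K V" "divsub K" "x \<in> V" "y \<in> V"
  shows "x - y \<in> V"
  using subspD(2)[OF assms(1) assms(3) subsp_neg[OF assms(1,2,4)]] by simp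

lemma span_zero: "0 \<in> right_span K S"
  unfolding right_span_def by (auto intro!: exI[of _ "{}"])

lemma span_base:
  assumes "divsub K" "s \<in> S"
  shows "s \<in> right_span K S"
  unfolding right_span_def using assms divsubD(2)[OF assms(1)]
  by (auto intro!: exI[of _ "{s}"] exI[of _ "\<lambda>_. 1"])

lemma span_mono: "S \<subseteq> S' \<Longrightarrow> right_span K S \<subseteq> right_span K S'"
  unfolding right_span_def by blast

lemma span_comb:
  assumes "finite T" "T \<subseteq> S" "\<forall>t\<in>T. c t \<in> K"
  shows "(\<Sum>t\<in>T. t * c t) \<in> right_span K S"
  unfolding right_span_def using assms by blast

lemma span_add:
  assumes "divsub K" "x \<in> right_span K S" "y \<in> right_span K S"
  shows "x + y \<in> right_span K S"
proof -
  obtain T1 c1 where 1: "finite T1" "T1 \<subseteq> S" "\<forall>t\<in>T1. c1 t \<in> K" "x = (\<Sum>t\<in>T1. t * c1 t)"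
    using assms(2) unfolding right_span_def by blast
  obtain T2 c2 where 2: "finite T2" "T2 \<subseteq> S" "\<forall>t\<in>T2. c2 t \<in> K" "y = (\<Sum>t\<in>T2. t * c2 t)"
    using assms(3) unfolding right_span_def by blast
  define d1 where "d1 t = (if t \<in> T1 then c1 t else 0)" for t
  define d2 where "d2 t = (if t \<in> T2 then c2 t else 0)" for t
  have f: "finite (T1 \<union> T2)" using 1 2 by simp
  have "x = (\<Sum>t\<in>T1 \<union> T2. t * d1 t)"
    unfolding 1(4) by (rule sum.mono_neutral_cong_left[OF f]) (auto simp: d1_def)
  moreover have "y = (\<Sum>t\<in>T1 \<union> T2. t * d2 t)"
    unfolding 2(4) by (rule sum.mono_neutral_cong_left[OF f]) (auto simp: d2_def)
  ultimately have "x + y = (\<Sum>t\<in>T1 \<union> T2. t * (d1 t + d2 t))"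
    by (simp add: sum.distrib distrib_left)
  moreover have "\<forall>t\<in>T1 \<union> T2. d1 t + d2 t \<in> K"
    using 1(3) 2(3) divsubD[OF assms(1)] by (auto simp: d1_def d2_def)
  ultimately show ?thesis using span_comb[OF f _ ] 1(2) 2(2) by auto
qed

lemma span_mult:
  assumes "divsub K" "x \<in> right_span K S" "k \<in> K"
  shows "x * k \<in> right_span K S"
proof -
  obtain T1 c1 where 1: "finite T1" "T1 \<subseteq> S" "\<forall>t\<in>T1. c1 t \<in> K" "x = (\<Sum>t\<in>T1. t * c1 t)"
    using assms(2) unfolding right_span_def by blast
  have "x * k = (\<Sum>t\<in>T1. t * (c1 t * k))"
    unfolding 1(4) by (simp add: sum_distrib_right mult.assoc)
  moreover have "\<forall>t\<in>T1. c1 t * k \<in> K" using 1(3) assms(3) divsubD(4)[OF assms(1)] by blast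
  ultimately show ?thesis using span_comb[OF 1(1,2)] by auto
qed

lemma span_subsp: "divsub K \<Longrightarrow> subsp K (right_span K S)"
  unfolding subsp_def using span_zero span_add span_mult by blast

lemma span_minimal:
  assumes "subsp K V" "S \<subseteq> V"
  shows "right_span K S \<subseteq> V"
proof
  fix x assume "x \<in> right_span K S"
  then obtain T1 c1 where 1: "finite T1" "T1 \<subseteq> S" "\<forall>t\<in>T1. c1 t \<in> K" "x = (\<Sum>t\<in>T1. t * c1 t)"
    unfolding right_span_def by blast
  show "x \<in> V" unfolding 1(4)
    by (rule subsp_sum[OF assms(1) 1(1)]) (use 1 assms subspD(3)[OF assms(1)] in blast)
qed

lemma span_subset:
  assumes "divsub K" "S \<subseteq> right_span K S'"
  shows "right_span K S \<subseteq> right_span K S'"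
  using span_minimal[OF span_subsp[OF assms(1)] assms(2)] .

lemma span_insert:
  assumes "divsub K" "v \<in> right_span K (insert s S)"
  shows "\<exists>w k. w \<in> right_span K S \<and> k \<in> K \<and> v = w + s * k"
proof -
  let ?V = "{w + s * k | w k. w \<in> right_span K S \<and> k \<in> K}"
  have memV: "\<And>w k. w \<in> right_span K S \<Longrightarrow> k \<in> K \<Longrightarrow> w + s * k \<in> ?V" by auto
  have "subsp K ?V"
    unfolding subsp_def
  proof (intro conjI ballI)
    have eq: "(0::'a) = 0 + s * 0" by simp
    show "0 \<in> ?V" by (subst eq, intro memV span_zero divsubD(1)[OF assms(1)])
  next
    fix x y assume "x \<in> ?V" "y \<in> ?V"
    then obtain w1 k1 w2 k2 where "x = w1 + s * k1" "y = w2 + s * k2" "w1 \<in> right_span K S"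
      "w2 \<in> right_span K S" "k1 \<in> K" "k2 \<in> K" by blast
    moreover have eq: "x + y = (w1 + w2) + s * (k1 + k2)" using \<open>x = _\<close> \<open>y = _\<close> by (simp add: algebra_simps)
    ultimately show "x + y \<in> ?V" unfolding eq by (intro memV span_add[OF assms(1)] divsubD(3)[OF assms(1)])
  next
    fix x k assume "x \<in> ?V" "k \<in> K"
    then obtain w1 k1 where "x = w1 + s * k1" "w1 \<in> right_span K S" "k1 \<in> K" by blast
    moreover have eq: "x * k = w1 * k + s * (k1 * k)" using \<open>x = _\<close> by (simp add: distrib_right mult.assoc)
    ultimately show "x * k \<in> ?V" unfolding eq by (intro memV span_mult[OF assms(1)] divsubD(4)[OF assms(1)] \<open>k \<in> K\<close>)
  qed
  moreover have "insert s S \<subseteq> ?V"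
  proof
    fix x assume "x \<in> insert s S"
    then show "x \<in> ?V"
    proof
      assume "x = s" have eq: "x = 0 + s * 1" using \<open>x = s\<close> by simp
      show ?thesis by (subst eq, intro memV span_zero divsubD(2)[OF assms(1)])
    next
      assume "x \<in> S" have eq: "x = x + s * 0" by simp
      show ?thesis by (subst eq, intro memV span_base[OF assms(1)] divsubD(1)[OF assms(1)] \<open>x \<in> S\<close>)
    qed
  qed
  ultimately have "right_span K (insert s S) \<subseteq> ?V" by (rule span_minimal)
  with assms(2) have "v \<in> ?V" by (rule rev_subsetD)
  then show ?thesis by (auto)
qed

lemma span_union_decomp:
  assumes "divsub K" "v \<in> right_span K (B \<union> D)"
  shows "\<exists>u w. u \<in> right_span K B \<and> w \<in> right_span K D \<and> v = u + w"
proof -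
  let ?V = "{u + w | u w. u \<in> right_span K B \<and> w \<in> right_span K D}"
  have memV: "\<And>u w. u \<in> right_span K B \<Longrightarrow> w \<in> right_span K D \<Longrightarrow> u + w \<in> ?V" by auto
  have "subsp K ?V"
    unfolding subsp_def
  proof (intro conjI ballI)
    have eq: "(0::'a) = 0 + 0" by simp
    show "0 \<in> ?V" by (subst eq, intro memV span_zero)
  next
    fix x y assume "x \<in> ?V" "y \<in> ?V"
    then obtain w1 k1 w2 k2 where "x = w1 + k1" "y = w2 + k2" "w1 \<in> right_span K B"
      "w2 \<in> right_span K B" "k1 \<in> right_span K D" "k2 \<in> right_span K D" by blast
    moreover have eq: "x + y = (w1 + w2) + (k1 + k2)" using \<open>x = _\<close> \<open>y = _\<close> by (simp add: algebra_simps)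
    ultimately show "x + y \<in> ?V" unfolding eq by (intro memV span_add[OF assms(1)])
  next
    fix x k assume "x \<in> ?V" "k \<in> K"
    then obtain w1 k1 where "x = w1 + k1" "w1 \<in> right_span K B" "k1 \<in> right_span K D" by blast
    moreover have eq: "x * k = w1 * k + k1 * k" using \<open>x = _\<close> by (simp add: distrib_right)
    ultimately show "x * k \<in> ?V" unfolding eq by (intro memV span_mult[OF assms(1)] \<open>k \<in> K\<close>)
  qed
  moreover have "B \<union> D \<subseteq> ?V"
  proof
    fix x assume "x \<in> B \<union> D"
    then show "x \<in> ?V"
    proof
      assume "x \<in> B" have eq: "x = x + 0" by simp
      show ?thesis by (subst eq, intro memV span_base[OF assms(1)] span_zero \<open>x \<in> B\<close>)
    next
      assume "x \<in> D" have eq: "x = 0 + x" by simp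
      show ?thesis by (subst eq, intro memV span_base[OF assms(1)] span_zero \<open>x \<in> D\<close>)
    qed
  qed
  ultimately have "right_span K (B \<union> D) \<subseteq> ?V" by (rule span_minimal)
  with assms(2) have "v \<in> ?V" by (rule rev_subsetD)
  then show ?thesis by (auto)
qed


lemma indepD:
  "right_indep K B \<Longrightarrow> finite T \<Longrightarrow> T \<subseteq> B \<Longrightarrow> \<forall>t\<in>T. c t \<in> K \<Longrightarrow> (\<Sum>t\<in>T. t * c t) = 0 \<Longrightarrow> t \<in> T \<Longrightarrow> c t = 0"
  unfolding right_indep_def by blast

lemma relfreeD:
  "relfree K L B \<Longrightarrow> finite T \<Longrightarrow> T \<subseteq> B \<Longrightarrow> \<forall>t\<in>T. c t \<in> K \<Longrightarrow> (\<Sum>t\<in>T. L t * c t) = 0 \<Longrightarrow> t \<in> T \<Longrightarrow> c t = 0"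
  unfolding relfree_def by blast

lemma indep_subset: "right_indep K B \<Longrightarrow> C \<subseteq> B \<Longrightarrow> right_indep K C"
  unfolding right_indep_def by (meson order_trans)

lemma indep_nz:
  assumes "divsub K" "right_indep K B"
  shows "0 \<notin> B"
proof
  assume "0 \<in> B"
  have "(\<lambda>_. 1::'a) 0 = 0"
    by (rule indepD[OF assms(2), of "{0}"]) (use \<open>0 \<in> B\<close> divsubD(2)[OF assms(1)] in auto)
  then show False by simp
qed

lemma indep_single:
  assumes "divsub K" "x \<noteq> (0::'a::division_ring)"
  shows "right_indep K {x}"
  unfolding right_indep_def
proof (intro allI impI ballI)
  fix T coef t assume h: "finite T \<and> T \<subseteq> {x} \<and> (\<forall>t\<in>T. coef t \<in> K) \<and> (\<Sum>t\<in>T. t * coef t) = 0" "t \<in> T"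
  then have "T = {x}" "t = x" by auto
  then have "x * coef x = 0" using h by simp
  then show "coef t = 0" using assms(2) \<open>t = x\<close> by simp
qed

lemma solve_span:
  assumes "divsub K" "finite T" "\<forall>t\<in>T. c t \<in> K" "(\<Sum>t\<in>T. t * c t) = (0::'a::division_ring)"
    "s \<in> T" "c s \<noteq> 0"
  shows "s \<in> right_span K (T - {s})"
proof -
  have "(\<Sum>t\<in>T. t * c t) = s * c s + (\<Sum>t\<in>T - {s}. t * c t)"
    using assms(2,5) by (simp add: sum.remove)
  then have e: "s * c s = - (\<Sum>t\<in>T - {s}. t * c t)" using assms(4)
    by (simp add: eq_neg_iff_add_eq_0)
  have "(\<Sum>t\<in>T - {s}. t * c t) \<in> right_span K (T - {s})"
    by (rule span_comb) (use assms in auto)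
  then have "- (\<Sum>t\<in>T - {s}. t * c t) \<in> right_span K (T - {s})"
    using subsp_neg[OF span_subsp[OF assms(1)] assms(1)] by blast
  then have "- (\<Sum>t\<in>T - {s}. t * c t) * inverse (c s) \<in> right_span K (T - {s})"
    using span_mult[OF assms(1)] divsubD(6)[OF assms(1)] assms(3,5) by blast
  moreover have "- (\<Sum>t\<in>T - {s}. t * c t) * inverse (c s) = s"
    using e assms(6) by (metis mult.assoc right_inverse mult_1_right)
  ultimately show ?thesis by simp
qed

lemma indep_insert:
  assumes "divsub K" "right_indep K B" "s \<notin> right_span K B"
  shows "right_indep K (insert s B)"
  unfolding right_indep_def
proof (intro allI impI)
  fix T coef assume h: "finite T \<and> T \<subseteq> insert s B \<and> (\<forall>t\<in>T. coef t \<in> K) \<and> (\<Sum>t\<in>T. t * coef t) = 0"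
  show "\<forall>t\<in>T. coef t = 0"
  proof (cases "s \<in> T \<and> coef s \<noteq> 0")
    case True
    then have "s \<in> right_span K (T - {s})" using solve_span[OF assms(1)] h by blast
    moreover have "right_span K (T - {s}) \<subseteq> right_span K B" using h by (intro span_mono) auto
    ultimately show ?thesis using assms(3) by blast
  next
    case False
    have "(\<Sum>t\<in>T. t * coef t) = (\<Sum>t\<in>T - {s}. t * coef t)"
      using False h by (cases "s \<in> T") (auto simp: sum.remove)
    then have "(\<Sum>t\<in>T - {s}. t * coef t) = 0" using h by simp
    then have "\<forall>t\<in>T - {s}. coef t = 0"
      using indepD[OF assms(2), of "T - {s}" coef] h by blast
    then show ?thesis using False by blast
  qed
qed

lemma indep_dep:
  assumes "divsub K" "\<not> right_indep K B"
  shows "\<exists>t\<in>B. t \<in> right_span K (B - {t})"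
proof -
  obtain T c where h: "finite T" "T \<subseteq> B" "\<forall>t\<in>T. c t \<in> K" "(\<Sum>t\<in>T. t * c t) = 0"
    and "\<exists>t\<in>T. c t \<noteq> 0" using assms(2) unfolding right_indep_def by blast
  then obtain s where s: "s \<in> T" "c s \<noteq> 0" by blast
  have "s \<in> right_span K (T - {s})" using solve_span[OF assms(1) h(1) h(3) h(4) s] .
  moreover have "right_span K (T - {s}) \<subseteq> right_span K (B - {s})" using h by (intro span_mono) auto
  ultimately show ?thesis using s h by blast
qed

lemma indep_notin_span:
  assumes "divsub K" "right_indep K B" "w \<in> B"
  shows "w \<notin> right_span K (B - {w})"
proof
  assume "w \<in> right_span K (B - {w})"
  then obtain T c where h: "finite T" "T \<subseteq> B - {w}" "\<forall>t\<in>T. c t \<in> K" "w = (\<Sum>t\<in>T. t * c t)"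
    unfolding right_span_def by blast
  define c' where "c' = c(w := -1)"
  have wT: "w \<notin> T" using h by blast
  have "(\<Sum>t\<in>insert w T. t * c' t) = w * c' w + (\<Sum>t\<in>T. t * c' t)"
    using h(1) wT by simp
  also have "(\<Sum>t\<in>T. t * c' t) = (\<Sum>t\<in>T. t * c t)"
    using wT by (intro sum.cong) (auto simp: c'_def)
  finally have "(\<Sum>t\<in>insert w T. t * c' t) = 0" using h(4) by (simp add: c'_def)
  moreover have "\<forall>t\<in>insert w T. c' t \<in> K"
    using h(3) divsubD(2,5)[OF assms(1)] wT by (auto simp: c'_def)
  moreover have "insert w T \<subseteq> B" using h assms(3) by blast
  ultimately have "c' w = 0" using indepD[OF assms(2), of "insert w T" c' w] h(1) by blast
  then show False by (simp add: c'_def)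
qed

lemma relfree_inj:
  fixes L :: "'a::division_ring \<Rightarrow> 'a"
  assumes "divsub K" "relfree K L D"
  shows "inj_on L D"
proof (rule inj_onI, rule ccontr)
  fix x y assume h: "x \<in> D" "y \<in> D" "L x = L y" "x \<noteq> y"
  define c where "c t = (if t = x then (1::'a) else - 1)" for t :: 'a
  have "(\<Sum>t\<in>{x, y}. L t * c t) = 0" using h by (simp add: c_def)
  moreover have "\<forall>t\<in>{x,y}. c t \<in> K" using divsubD(2,5)[OF assms(1)] by (auto simp: c_def)
  ultimately have "c x = 0" using relfreeD[OF assms(2), of "{x,y}" c x] h by blast
  then show False by (simp add: c_def)
qed

lemma relfree_indep:
  assumes "divsub K" "relfree K L D"
  shows "right_indep K (L ` D)"
  unfolding right_indep_def
proof (intro allI impI ballI)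
  fix T coef u assume h: "finite T \<and> T \<subseteq> L ` D \<and> (\<forall>t\<in>T. coef t \<in> K) \<and> (\<Sum>t\<in>T. t * coef t) = 0" "u \<in> T"
  obtain T0 where T0: "T0 \<subseteq> D" "T = L ` T0" using h subset_image_iff by metis
  have inj: "inj_on L T0" using relfree_inj[OF assms] T0 inj_on_subset by blast
  have fin: "finite T0" using h T0 inj finite_image_iff by metis
  have "(\<Sum>t\<in>T0. L t * coef (L t)) = 0" using h T0 inj by (simp add: sum.reindex)
  then have "\<forall>t\<in>T0. coef (L t) = 0" using relfreeD[OF assms(2), of T0 "\<lambda>t. coef (L t)"] fin T0 h by auto
  then show "coef u = 0" using h T0 by blast
qed


lemma span_empty: "right_span K {} = {0}"
  unfolding right_span_def by auto

lemma steinitz_fin: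
  fixes S :: "'a::division_ring set"
  assumes K: "divsub K" and "finite S"
  shows "finite B \<Longrightarrow> right_indep K B \<Longrightarrow> B \<subseteq> right_span K S \<Longrightarrow> card B \<le> card S"
  using assms(2)
proof (induction S arbitrary: B rule: finite_induct)
  case empty
  then have "B \<subseteq> {0}" by (simp add: span_empty)
  moreover have "0 \<notin> B" using indep_nz[OF K empty.prems(2)] .
  ultimately have "B = {}" by blast
  then show ?case by simp
next
  case (insert s S)
  show ?case
  proof (cases "B \<subseteq> right_span K S")
    case True
    then have "card B \<le> card S" using insert by blast
    then show ?thesis using insert by simp
  next
    case False
    then obtain b0 where b0: "b0 \<in> B" "b0 \<notin> right_span K S" by blast
    have "\<forall>b\<in>B. \<exists>p. fst p \<in> right_span K S \<and> snd p \<in> K \<and> b = fst p + s * snd p"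
      using span_insert[OF K] insert.prems(3) by fastforce
    then obtain p where p: "\<forall>b\<in>B. fst (p b) \<in> right_span K S \<and> snd (p b) \<in> K \<and> b = fst (p b) + s * snd (p b)"
      by metis
    define W where "W b = fst (p b)" for b
    define k where "k b = snd (p b)" for b
    have Wk: "\<And>b. b \<in> B \<Longrightarrow> W b \<in> right_span K S \<and> k b \<in> K \<and> b = W b + s * k b"
      using p unfolding W_def k_def by blast
    have WS: "\<And>b. b \<in> B \<Longrightarrow> W b \<in> right_span K S" and kK: "\<And>b. b \<in> B \<Longrightarrow> k b \<in> K"
      using Wk by blast+
    have k0: "k b0 \<noteq> 0"
    proof
      assume "k b0 = 0"
      then have "b0 = W b0" using Wk[OF b0(1)] by (metis add_0_right mult_zero_right)
      then show False using WS[OF b0(1)] b0(2) by simp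
    qed
    define lam where "lam b = inverse (k b0) * k b" for b
    have lamK: "\<And>b. b \<in> B \<Longrightarrow> lam b \<in> K"
      unfolding lam_def using kK b0(1) divsubD(4,6)[OF K] by blast
    define phi where "phi b = b - b0 * lam b" for b
    have phi_span: "phi b \<in> right_span K S" if "b \<in> B" for b
    proof -
      have e1: "b = W b + s * k b" using Wk[OF that] by (rule conjunct2[OF conjunct2])
      have e0: "b0 = W b0 + s * k b0" using Wk[OF b0(1)] by (rule conjunct2[OF conjunct2])
      have e: "b - b0 * lam b = (W b + s * k b) - (W b0 + s * k b0) * lam b"
        by (rule arg_cong2[where f="\<lambda>x y. x - y * lam b"], rule e1, rule e0)
      have "phi b = W b - W b0 * lam b + (s * k b - s * (k b0 * lam b))"
        unfolding phi_def e by (simp add: algebra_simps)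
      also have "k b0 * lam b = k b" unfolding lam_def using k0
        by (simp add: mult.assoc[symmetric])
      finally have "phi b = W b - W b0 * lam b" by simp
      moreover have "W b0 * lam b \<in> right_span K S"
        using span_mult[OF K] WS[OF b0(1)] lamK[OF that] by blast
      ultimately show ?thesis
        using subsp_diff[OF span_subsp[OF K] K] WS[OF that] by simp
    qed
    have rf: "relfree K phi (B - {b0})"
      unfolding relfree_def
    proof (intro allI impI ballI)
      fix T c t assume h: "finite T \<and> T \<subseteq> B - {b0} \<and> (\<forall>t\<in>T. c t \<in> K) \<and> (\<Sum>t\<in>T. phi t * c t) = 0" "t \<in> T"
      define c' where "c' = c(b0 := - (\<Sum>t\<in>T. lam t * c t))"
      have b0T: "b0 \<notin> T" using h by blast
      have "(\<Sum>t\<in>T. phi t * c t) = (\<Sum>t\<in>T. t * c t) - b0 * (\<Sum>t\<in>T. lam t * c t)"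
        unfolding phi_def by (simp add: algebra_simps sum_subtractf sum_distrib_left)
      moreover have "(\<Sum>t\<in>insert b0 T. t * c' t) = b0 * c' b0 + (\<Sum>t\<in>T. t * c' t)"
        using h b0T by simp
      moreover have "(\<Sum>t\<in>T. t * c' t) = (\<Sum>t\<in>T. t * c t)"
        using b0T by (intro sum.cong) (auto simp: c'_def)
      ultimately have s0: "(\<Sum>t\<in>insert b0 T. t * c' t) = 0" using h by (simp add: c'_def)
      have kK': "\<forall>t\<in>insert b0 T. c' t \<in> K"
      proof
        fix u assume "u \<in> insert b0 T"
        show "c' u \<in> K"
        proof (cases "u = b0")
          case True
          have "(\<Sum>t\<in>T. lam t * c t) \<in> K"
          proof (rule divsub_sum[OF K])
            fix t assume "t \<in> T"
            then have "t \<in> B" "c t \<in> K" using h by auto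
            then show "lam t * c t \<in> K" using divsubD(4)[OF K lamK] by blast
          qed
          then show ?thesis using True divsubD(5)[OF K] by (simp add: c'_def)
        qed (use h \<open>u \<in> insert b0 T\<close> in \<open>auto simp: c'_def\<close>)
      qed
      have "c' t = 0"
        by (rule indepD[OF insert.prems(2) _ _ kK' s0]) (use h b0(1) in auto)
      moreover have "t \<noteq> b0" using b0T h(2) by blast
      ultimately show "c t = 0" by (simp add: c'_def)
    qed
    have inj: "inj_on phi (B - {b0})" using relfree_inj[OF K rf] .
    have ind: "right_indep K (phi ` (B - {b0}))" using relfree_indep[OF K rf] .
    have "card (phi ` (B - {b0})) \<le> card S"
      by (rule insert.IH) (use ind phi_span insert.prems(1) in auto)
    then have "card (B - {b0}) \<le> card S" using card_image[OF inj] by simp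
    then show ?thesis using insert b0(1) by (simp add: card_Diff_singleton)
  qed
qed

lemma steinitz:
  fixes S :: "'a::division_ring set"
  assumes K: "divsub K" and "finite S" "right_indep K B" "B \<subseteq> right_span K S"
  shows "finite B \<and> card B \<le> card S"
proof -
  have "finite B"
  proof (rule ccontr)
    assume "infinite B"
    then obtain B' where "finite B'" "card B' = Suc (card S)" "B' \<subseteq> B"
      using infinite_arbitrarily_large by blast
    then have "card B' \<le> card S"
      using steinitz_fin[OF K assms(2), of B'] indep_subset[OF assms(3)] assms(4) by blast
    then show False using \<open>card B' = _\<close> by simp
  qed
  then show ?thesis using steinitz_fin[OF K assms(2)] assms by blast
qed

lemma extend_basis:
  fixes X :: "'a::division_ring set"
  assumes K: "divsub K" and W: "subsp K W" and X: "finite X" "W \<subseteq> right_span K X"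
    and C: "C \<subseteq> W" "right_indep K C"
  shows "\<exists>B. C \<subseteq> B \<and> B \<subseteq> W \<and> right_indep K B \<and> finite B \<and> right_span K B = W"
proof -
  let ?P = "\<lambda>B. C \<subseteq> B \<and> B \<subseteq> W \<and> right_indep K B"
  have bnd: "\<forall>B. ?P B \<longrightarrow> card B < Suc (card X)"
    using steinitz[OF K X(1)] X(2) by (meson less_Suc_eq_le order_trans)
  obtain B where B: "?P B" "\<forall>B'. ?P B' \<longrightarrow> card B' \<le> card B"
    using ex_has_greatest_nat[of ?P C card "Suc (card X)"] C bnd by blast
  have fin: "finite B" using steinitz[OF K X(1)] X(2) B(1) by blast
  have sub: "right_span K B \<subseteq> W" using span_minimal[OF W] B(1) by blast
  have "W \<subseteq> right_span K B"
  proof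
    fix w assume "w \<in> W"
    show "w \<in> right_span K B"
    proof (rule ccontr)
      assume nw: "w \<notin> right_span K B"
      then have "w \<notin> B" using span_base[OF K] by blast
      have "?P (insert w B)" using B(1) \<open>w \<in> W\<close> indep_insert[OF K _ nw] by blast
      then have "card (insert w B) \<le> card B" using B(2) by blast
      then show False using fin \<open>w \<notin> B\<close> by simp
    qed
  qed
  then show ?thesis using B fin sub by blast
qed

lemma dim_eq:
  fixes B :: "'a::division_ring set"
  assumes K: "divsub K" and "finite B" "right_indep K B"
  shows "right_dim K (right_span K B) = card B"
proof -
  let ?V = "right_span K B"
  have ex: "\<exists>B'. B' \<subseteq> ?V \<and> right_indep K B' \<and> right_span K B' = ?V"
    using assms span_base[OF K] by blast
  define B' where "B' = (SOME B'. B' \<subseteq> ?V \<and> right_indep K B' \<and> right_span K B' = ?V)"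
  have B': "B' \<subseteq> ?V" "right_indep K B'" "right_span K B' = ?V"
    using someI_ex[OF ex] unfolding B'_def by blast+
  have 1: "finite B' \<and> card B' \<le> card B" using steinitz[OF K assms(2) B'(2,1)] .
  have "B \<subseteq> right_span K B'" using B'(3) span_base[OF K] by blast
  then have 2: "card B \<le> card B'" using steinitz[OF K _ assms(3)] 1 by blast
  show ?thesis unfolding right_dim_def B'_def[symmetric] using 1 2 by simp
qed


lemma lin_zero: "lin K L \<Longrightarrow> L 0 = 0"
  unfolding lin_def by (metis add_cancel_right_right add_0)

lemma lin_add: "lin K L \<Longrightarrow> L (x + y) = L x + L y"
  unfolding lin_def by blast

lemma lin_mult: "lin K L \<Longrightarrow> k \<in> K \<Longrightarrow> L (x * k) = L x * k"
  unfolding lin_def by blast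

lemma lin_neg: "lin K L \<Longrightarrow> L (- x) = - L x"
  using lin_add[of K L x "- x"] lin_zero[of K L] by (metis neg_eq_iff_add_eq_0 add.right_inverse)

lemma lin_diff: "lin K L \<Longrightarrow> L (x - y) = L x - L y"
  using lin_add[of K L x "- y"] lin_neg[of K L y] by simp

lemma lin_sum: "lin K L \<Longrightarrow> L (sum f T) = (\<Sum>t\<in>T. L (f t))"
  by (induction T rule: infinite_finite_induct) (auto simp: lin_zero lin_add)

lemma lin_span:
  assumes K: "divsub K" and L: "lin K L" and x: "x \<in> right_span K X"
  shows "L x \<in> right_span K (L ` X)"
proof -
  obtain T c where h: "finite T" "T \<subseteq> X" "\<forall>t\<in>T. c t \<in> K" "x = (\<Sum>t\<in>T. t * c t)"
    using x unfolding right_span_def by blast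
  have "L x = (\<Sum>t\<in>T. L t * c t)" using h by (simp add: lin_sum[OF L] lin_mult[OF L])
  also have "\<dots> \<in> right_span K (L ` X)"
  proof (rule subsp_sum[OF span_subsp[OF K] h(1)])
    fix t assume "t \<in> T"
    then show "L t * c t \<in> right_span K (L ` X)"
      using span_mult[OF K span_base[OF K]] h by blast
  qed
  finally show ?thesis .
qed

lemma ker_subsp:
  assumes "lin K L"
  shows "subsp K {v. L v = 0}"
  unfolding subsp_def using lin_zero[OF assms] lin_add[OF assms] lin_mult[OF assms] by auto

lemma subsp_inter: "subsp K V \<Longrightarrow> subsp K W \<Longrightarrow> subsp K (V \<inter> W)"
  unfolding subsp_def by blast

lemma rank_nullity:
  fixes S :: "'a::division_ring set"
  assumes K: "divsub K" and L: "lin K L" and S: "finite S" "right_indep K S"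
  shows "\<exists>B C. finite B \<and> right_indep K B \<and> right_span K B = right_span K S \<inter> {v. L v = 0}
    \<and> finite C \<and> right_indep K C \<and> right_span K C = right_span K (L ` S) \<and> card S = card B + card C"
proof -
  let ?W = "right_span K S \<inter> {v. L v = 0}"
  have W: "subsp K ?W" using subsp_inter[OF span_subsp[OF K] ker_subsp[OF L]] .
  obtain B where B: "B \<subseteq> ?W" "right_indep K B" "finite B" "right_span K B = ?W"
    using extend_basis[OF K W S(1), of "{}"] indep_subset[OF S(2)] by blast
  obtain E where E: "B \<subseteq> E" "E \<subseteq> right_span K S" "right_indep K E" "finite E"
    "right_span K E = right_span K S"
    using extend_basis[OF K span_subsp[OF K] S(1) order_refl, of B] B by blast
  define D where "D = E - B"
  have cardE: "card E = card S" using dim_eq[OF K E(4,3)] dim_eq[OF K S] E(5) by simp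
  have rf: "relfree K L D"
    unfolding relfree_def
  proof (intro allI impI ballI)
    fix T c t assume h: "finite T \<and> T \<subseteq> D \<and> (\<forall>t\<in>T. c t \<in> K) \<and> (\<Sum>t\<in>T. L t * c t) = 0" "t \<in> T"
    define v where "v = (\<Sum>t\<in>T. t * c t)"
    have "L v = 0" using h unfolding v_def by (simp add: lin_sum[OF L] lin_mult[OF L])
    moreover have "v \<in> right_span K S"
      unfolding v_def using E(2,5) h D_def span_comb[of T E c K] by auto
    ultimately have "v \<in> right_span K B" using B(4) by blast
    then obtain T' c' where h': "finite T'" "T' \<subseteq> B" "\<forall>t\<in>T'. c' t \<in> K" "v = (\<Sum>t\<in>T'. t * c' t)"
      unfolding right_span_def by blast
    have disj: "T \<inter> T' = {}" using h h' D_def by blast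
    define g where "g u = (if u \<in> T then c u else - c' u)" for u
    have "(\<Sum>u\<in>T \<union> T'. u * g u) = (\<Sum>u\<in>T. u * g u) + (\<Sum>u\<in>T'. u * g u)"
      using h h'(1) disj by (simp add: sum.union_disjoint)
    also have "(\<Sum>u\<in>T. u * g u) = v" unfolding v_def g_def by simp
    also have "(\<Sum>u\<in>T'. u * g u) = - v"
      unfolding h'(4) g_def using disj by (auto simp: sum_negf[symmetric] intro!: sum.cong)
    finally have s0: "(\<Sum>u\<in>T \<union> T'. u * g u) = 0" by simp
    have gK: "\<forall>u\<in>T \<union> T'. g u \<in> K" using h h'(3) divsubD(5)[OF K] by (auto simp: g_def)
    have "g t = 0"
      by (rule indepD[OF E(3) _ _ gK s0]) (use h h' E(1) D_def in auto)
    then show "c t = 0" using h(2) by (simp add: g_def)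
  qed
  have inj: "inj_on L D" using relfree_inj[OF K rf] .
  have indC: "right_indep K (L ` D)" using relfree_indep[OF K rf] .
  have spanC: "right_span K (L ` D) = right_span K (L ` S)"
  proof
    show "right_span K (L ` D) \<subseteq> right_span K (L ` S)"
    proof (rule span_subset[OF K], rule subsetI)
      fix y assume "y \<in> L ` D"
      then obtain d where "d \<in> D" "y = L d" by blast
      then have "d \<in> right_span K S" using E(2) D_def by blast
      then show "y \<in> right_span K (L ` S)" using lin_span[OF K L] \<open>y = L d\<close> by blast
    qed
  next
    show "right_span K (L ` S) \<subseteq> right_span K (L ` D)"
    proof (rule span_subset[OF K], rule subsetI)
      fix y assume "y \<in> L ` S"
      then obtain s where "s \<in> S" "y = L s" by blast
      then have "s \<in> right_span K (B \<union> D)" using E(1,5) D_def span_base[OF K]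
        by (metis Un_Diff_cancel sup.absorb2)
      then obtain u w where uw: "u \<in> right_span K B" "w \<in> right_span K D" "s = u + w"
        using span_union_decomp[OF K] by blast
      have "L u = 0" using uw(1) B(4) by blast
      then have "y = L w" using \<open>y = L s\<close> uw(3) lin_add[OF L] by simp
      then show "y \<in> right_span K (L ` D)" using lin_span[OF K L uw(2)] by simp
    qed
  qed
  have "card E = card B + card D" unfolding D_def using E(1,4) B(3)
    by (metis card_Diff_subset le_add_diff_inverse card_mono)
  then have "card S = card B + card (L ` D)" using cardE card_image[OF inj] by simp
  moreover have "finite (L ` D)" using E(4) D_def by simp
  ultimately show ?thesis using B indC spanC by blast
qed


definition bounded :: "nat \<Rightarrow> (nat \<Rightarrow> 'a::zero) \<Rightarrow> bool" where
  "bounded N F \<longleftrightarrow> (\<forall>k\<ge>N. F k = 0)"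

lemma bounded_mono: "bounded N F \<Longrightarrow> N \<le> M \<Longrightarrow> bounded M F"
  unfolding bounded_def by auto

lemma bounded_spoly: "bounded N F \<Longrightarrow> spoly F"
  unfolding bounded_def spoly_def
  by (rule finite_subset[of _ "{..<N}"]) (auto simp: not_le[symmetric])

lemma spoly_bounded: "spoly F \<Longrightarrow> \<exists>N. bounded N F"
proof -
  assume "spoly F"
  then have f: "finite {k. F k \<noteq> 0}" unfolding spoly_def .
  show ?thesis
  proof (intro exI[of _ "Suc (Max {k. F k \<noteq> 0})"])
    show "bounded (Suc (Max {k. F k \<noteq> 0})) F"
      unfolding bounded_def using Max_ge[OF f] by (metis (mono_tags) Suc_le_eq mem_Collect_eq not_le)
  qed
qed

locale sk =
  fixes \<sigma> \<delta> :: "'a::division_ring \<Rightarrow> 'a"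
  assumes sigma: "ring_endo \<sigma>" and delta: "sigma_derivation \<sigma> \<delta>"
begin

lemma s_add: "\<sigma> (x + y) = \<sigma> x + \<sigma> y" using sigma unfolding ring_endo_def by blast
lemma s_mult: "\<sigma> (x * y) = \<sigma> x * \<sigma> y" using sigma unfolding ring_endo_def by blast
lemma s_one: "\<sigma> 1 = 1" using sigma unfolding ring_endo_def by blast
lemma s_zero: "\<sigma> 0 = 0" using s_add[of 0 0] by simp
lemma s_nz: "x \<noteq> 0 \<Longrightarrow> \<sigma> x \<noteq> 0"
  using s_mult[of x "inverse x"] s_one by (metis mult_zero_left right_inverse zero_neq_one)
lemma d_add: "\<delta> (x + y) = \<delta> x + \<delta> y" using delta unfolding sigma_derivation_def by blast
lemma d_mult: "\<delta> (x * y) = \<sigma> x * \<delta> y + \<delta> x * y" using delta unfolding sigma_derivation_def by blast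
lemma d_zero: "\<delta> 0 = 0" using d_add[of 0 0] by simp
lemma d_one: "\<delta> 1 = 0" using d_mult[of 1 1] s_one by simp

abbreviation D where "D c \<equiv> Dop \<sigma> \<delta> c"

lemma Dop_add: "D c (x + y) = D c x + D c y"
  unfolding Dop_def by (simp add: s_add d_add distrib_right)
lemma Dop_zero: "D c 0 = 0"
  unfolding Dop_def by (simp add: s_zero d_zero)
lemma Dop_one: "D c 1 = c"
  unfolding Dop_def by (simp add: s_one d_one)
lemma Dop_core: "D c (y * b) = \<sigma> y * D c b + \<delta> y * b"
  unfolding Dop_def by (simp add: s_mult d_mult algebra_simps)
lemma Dop_sum: "D c (sum f T) = (\<Sum>t\<in>T. D c (f t))"
  by (induction T rule: infinite_finite_induct) (auto simp: Dop_zero Dop_add)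

lemma Dop_lin: "k \<in> Kcent \<sigma> \<delta> c \<Longrightarrow> D c (y * k) = D c y * k"
  unfolding Kcent_def using Dop_core[of c y k] by (simp add: Dop_def algebra_simps)

lemma Dop_conj: "b \<noteq> 0 \<Longrightarrow> D c (y * b) = D (D c b * inverse b) y * b"
  using Dop_core[of c y b] by (simp add: Dop_def algebra_simps)

lemma Dpow_add: "(D c ^^ i) (x + y) = (D c ^^ i) x + (D c ^^ i) y"
  by (induction i) (auto simp: Dop_add)
lemma Dpow_zero: "(D c ^^ i) 0 = 0"
  by (induction i) (auto simp: Dop_zero)
lemma Dpow_lin: "k \<in> Kcent \<sigma> \<delta> c \<Longrightarrow> (D c ^^ i) (y * k) = (D c ^^ i) y * k"
  by (induction i) (auto simp: Dop_lin)
lemma Dpow_conj: "b \<noteq> 0 \<Longrightarrow> (D c ^^ i) (y * b) = (D (D c b * inverse b) ^^ i) y * b"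
  by (induction i) (auto simp: Dop_conj)

lemma Kcent_divsub: "divsub (Kcent \<sigma> \<delta> c)"
  unfolding divsub_def
proof (intro conjI ballI)
  show "0 \<in> Kcent \<sigma> \<delta> c" unfolding Kcent_def by (simp add: Dop_zero)
  show "1 \<in> Kcent \<sigma> \<delta> c" unfolding Kcent_def by (simp add: Dop_one)
  fix x assume x: "x \<in> Kcent \<sigma> \<delta> c"
  {
    fix y assume y: "y \<in> Kcent \<sigma> \<delta> c"
    show "x + y \<in> Kcent \<sigma> \<delta> c" using x y unfolding Kcent_def by (simp add: Dop_add distrib_left)
    show "x * y \<in> Kcent \<sigma> \<delta> c" using x y Dop_lin[OF y, of x] unfolding Kcent_def by (simp add: mult.assoc)
  }
  show "- x \<in> Kcent \<sigma> \<delta> c" using x Dop_add[of c x "- x"] unfolding Kcent_def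
    by (simp add: Dop_zero) (metis add.commute add.right_inverse add_left_cancel)
  show "inverse x \<in> Kcent \<sigma> \<delta> c"
  proof (cases "x = 0")
    case True then show ?thesis using x by simp
  next
    case False
    have "D c (inverse x * x) = D c (inverse x) * x" using Dop_lin[OF x] .
    then have "c = D c (inverse x) * x" using False by (simp add: Dop_one)
    then have "D c (inverse x) = c * inverse x" using False
      by (metis mult.assoc right_inverse mult_1_right)
    then show ?thesis unfolding Kcent_def by simp
  qed
qed

end


context sk
begin

lemma D_eval_bound:
  assumes "bounded N F"
  shows "D_eval \<sigma> \<delta> F c y = (\<Sum>k<N. F k * (D c ^^ k) y)"
  unfolding D_eval_def
proof (rule sum.mono_neutral_left)
  show "finite {..<N}" by simp
  show "{i. F i \<noteq> 0} \<subseteq> {..<N}" using assms unfolding bounded_def by (auto simp: not_less[symmetric])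
  show "\<forall>i\<in>{..<N} - {i. F i \<noteq> 0}. F i * (D c ^^ i) y = 0" by simp
qed

lemma D_eval_lin:
  assumes "bounded N F"
  shows "lin (Kcent \<sigma> \<delta> c) (D_eval \<sigma> \<delta> F c)"
  unfolding lin_def D_eval_bound[OF assms]
  by (simp add: Dpow_add Dpow_lin distrib_left sum.distrib sum_distrib_right mult.assoc)

lemma D_eval_zero_y: "bounded N F \<Longrightarrow> D_eval \<sigma> \<delta> F c 0 = 0"
  by (simp add: D_eval_bound Dpow_zero)

lemma D_eval_conj:
  assumes "bounded N F" "b \<noteq> 0"
  shows "D_eval \<sigma> \<delta> F c (y * b) = D_eval \<sigma> \<delta> F (D c b * inverse b) y * b"
  unfolding D_eval_bound[OF assms(1)] using assms(2)
  by (simp add: Dpow_conj sum_distrib_right mult.assoc)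

lemma D_eval_diffF:
  assumes "bounded N F" "bounded N G"
  shows "D_eval \<sigma> \<delta> (\<lambda>k. F k - G k) c y = D_eval \<sigma> \<delta> F c y - D_eval \<sigma> \<delta> G c y"
proof -
  have b: "bounded N (\<lambda>k. F k - G k)" using assms unfolding bounded_def by simp
  show ?thesis unfolding D_eval_bound[OF b] D_eval_bound[OF assms(1)] D_eval_bound[OF assms(2)]
    by (simp add: sum_subtractf left_diff_distrib)
qed

lemma xmul_bound: "bounded N H \<Longrightarrow> bounded (Suc N) (xmul \<sigma> \<delta> H)"
  unfolding bounded_def xmul_def by (auto simp: s_zero d_zero)

lemma xmul_eval:
  assumes "bounded N H"
  shows "D_eval \<sigma> \<delta> (xmul \<sigma> \<delta> H) c y = D c (D_eval \<sigma> \<delta> H c y)"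
proof -
  have hN: "H N = 0" using assms unfolding bounded_def by simp
  have "D_eval \<sigma> \<delta> (xmul \<sigma> \<delta> H) c y = (\<Sum>k<Suc N. xmul \<sigma> \<delta> H k * (D c ^^ k) y)"
    by (rule D_eval_bound[OF xmul_bound[OF assms]])
  also have "\<dots> = (\<Sum>k<Suc N. (if k = 0 then 0 else \<sigma> (H (k - 1))) * (D c ^^ k) y)
      + (\<Sum>k<Suc N. \<delta> (H k) * (D c ^^ k) y)"
    unfolding xmul_def by (simp add: distrib_right sum.distrib)
  also have "(\<Sum>k<Suc N. (if k = 0 then 0 else \<sigma> (H (k - 1))) * (D c ^^ k) y)
      = (\<Sum>k<N. \<sigma> (H k) * (D c ^^ Suc k) y)"
    by (subst sum.lessThan_Suc_shift) simp
  also have "(\<Sum>k<Suc N. \<delta> (H k) * (D c ^^ k) y) = (\<Sum>k<N. \<delta> (H k) * (D c ^^ k) y)"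
    using hN by (simp add: d_zero)
  also have "(\<Sum>k<N. \<sigma> (H k) * (D c ^^ Suc k) y) + (\<Sum>k<N. \<delta> (H k) * (D c ^^ k) y)
      = (\<Sum>k<N. D c (H k * (D c ^^ k) y))"
    by (simp add: Dop_core sum.distrib)
  also have "\<dots> = D c (D_eval \<sigma> \<delta> H c y)"
    unfolding D_eval_bound[OF assms] by (simp add: Dop_sum)
  finally show ?thesis .
qed

lemma xmulpow:
  assumes "bounded N H"
  shows "bounded (N + i) ((xmul \<sigma> \<delta> ^^ i) H) \<and>
    D_eval \<sigma> \<delta> ((xmul \<sigma> \<delta> ^^ i) H) c y = (D c ^^ i) (D_eval \<sigma> \<delta> H c y)"
proof (induction i)
  case 0 then show ?case using assms by simp
next
  case (Suc i)
  then show ?case using xmul_bound[of "N + i"] xmul_eval[of "N + i"] by simp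
qed

lemma skew_mult_rep:
  assumes "bounded M G"
  shows "skew_mult \<sigma> \<delta> G H = (\<lambda>k. \<Sum>i<M. G i * ((xmul \<sigma> \<delta> ^^ i) H) k)"
  unfolding skew_mult_def
proof (rule ext, rule sum.mono_neutral_left)
  show "finite {..<M}" by simp
  show "{i. G i \<noteq> 0} \<subseteq> {..<M}" using assms unfolding bounded_def by (auto simp: not_less[symmetric])
qed auto

lemma skew_mult_bounded:
  assumes "bounded M G" "bounded N H"
  shows "bounded (M + N) (skew_mult \<sigma> \<delta> G H)"
  unfolding bounded_def skew_mult_rep[OF assms(1)]
proof (intro allI impI sum.neutral ballI)
  fix k i assume "M + N \<le> k" "i \<in> {..<M}"
  then have "((xmul \<sigma> \<delta> ^^ i) H) k = 0"
    using xmulpow[OF assms(2), of i] unfolding bounded_def by auto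
  then show "G i * (xmul \<sigma> \<delta> ^^ i) H k = 0" by simp
qed

lemma skew_mult_eval:
  assumes "bounded M G" "bounded N H"
  shows "D_eval \<sigma> \<delta> (skew_mult \<sigma> \<delta> G H) c y = D_eval \<sigma> \<delta> G c (D_eval \<sigma> \<delta> H c y)"
proof -
  let ?X = "\<lambda>i. (xmul \<sigma> \<delta> ^^ i) H"
  have "D_eval \<sigma> \<delta> (skew_mult \<sigma> \<delta> G H) c y
      = (\<Sum>k<M + N. (\<Sum>i<M. G i * ?X i k) * (D c ^^ k) y)"
    using D_eval_bound[OF skew_mult_bounded[OF assms]] skew_mult_rep[OF assms(1)] by simp
  also have "\<dots> = (\<Sum>i<M. G i * (\<Sum>k<M + N. ?X i k * (D c ^^ k) y))"
    by (simp add: sum_distrib_right sum_distrib_left mult.assoc sum.swap[of _ "{..<M + N}"])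
  also have "\<dots> = (\<Sum>i<M. G i * (D c ^^ i) (D_eval \<sigma> \<delta> H c y))"
  proof (rule sum.cong[OF refl])
    fix i assume "i \<in> {..<M}"
    then have b: "bounded (M + N) (?X i)" using xmulpow[OF assms(2), of i] bounded_mono by fastforce
    show "G i * (\<Sum>k<M + N. ?X i k * (D c ^^ k) y) = G i * (D c ^^ i) (D_eval \<sigma> \<delta> H c y)"
      using D_eval_bound[OF b, of c y, symmetric] xmulpow[OF assms(2), of i] by simp
  qed
  also have "\<dots> = D_eval \<sigma> \<delta> G c (D_eval \<sigma> \<delta> H c y)"
    using D_eval_bound[OF assms(1)] by simp
  finally show ?thesis .
qed

lemma xminus_bounded: "bounded 2 (x_minus a)"
  unfolding bounded_def x_minus_def by auto

lemma xminus_eval: "D_eval \<sigma> \<delta> (x_minus a) c y = D c y - a * y"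
  unfolding D_eval_bound[OF xminus_bounded] by (simp add: x_minus_def numeral_2_eq_2)

lemma xm_top: "bounded (Suc (Suc m)) ((xmul \<sigma> \<delta> ^^ m) (x_minus a)) \<and> ((xmul \<sigma> \<delta> ^^ m) (x_minus a)) (Suc m) = 1"
proof (induction m)
  case 0 then show ?case using xminus_bounded by (simp add: x_minus_def numeral_2_eq_2)
next
  case (Suc m)
  then have "bounded (Suc (Suc (Suc m))) ((xmul \<sigma> \<delta> ^^ Suc m) (x_minus a))"
    using xmul_bound by simp
  moreover have "((xmul \<sigma> \<delta> ^^ Suc m) (x_minus a)) (Suc (Suc m)) = 1"
    using Suc unfolding bounded_def
    by (simp add: xmul_def[of \<sigma> \<delta> "(xmul \<sigma> \<delta> ^^ m) (x_minus a)"] s_one d_zero)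
  ultimately show ?case by simp
qed

lemma skew_mult_zero: "skew_mult \<sigma> \<delta> (\<lambda>_. 0) H = (\<lambda>_. 0)"
  unfolding skew_mult_def by simp

lemma skew_mult_addL:
  assumes "bounded M G1" "bounded M G2"
  shows "skew_mult \<sigma> \<delta> (\<lambda>i. G1 i + G2 i) H = (\<lambda>k. skew_mult \<sigma> \<delta> G1 H k + skew_mult \<sigma> \<delta> G2 H k)"
proof -
  have b: "bounded M (\<lambda>i. G1 i + G2 i)" using assms unfolding bounded_def by simp
  show ?thesis unfolding skew_mult_rep[OF b] skew_mult_rep[OF assms(1)] skew_mult_rep[OF assms(2)]
    by (simp add: distrib_right sum.distrib)
qed

lemma divide_exist:
  "bounded (Suc N) F \<Longrightarrow> \<exists>G c. bounded N G \<and>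
     (\<lambda>k. F k - (if k = 0 then c else 0)) = skew_mult \<sigma> \<delta> G (x_minus a)"
proof (induction N arbitrary: F)
  case 0
  have "(\<lambda>k. F k - (if k = 0 then F 0 else 0)) = skew_mult \<sigma> \<delta> (\<lambda>_. 0) (x_minus a)"
    using 0 unfolding skew_mult_zero bounded_def by auto
  moreover have "bounded 0 (\<lambda>_. 0::'a)" unfolding bounded_def by simp
  ultimately show ?case by blast
next
  case (Suc m)
  define f where "f = F (Suc m)"
  define G0 where "G0 i = (if i = m then f else 0)" for i
  let ?X = "x_minus a"
  have bG0: "bounded (Suc m) G0" unfolding bounded_def G0_def by simp
  have P0: "skew_mult \<sigma> \<delta> G0 ?X = (\<lambda>k. f * ((xmul \<sigma> \<delta> ^^ m) ?X) k)"
    unfolding skew_mult_rep[OF bG0] by (simp add: G0_def if_distrib sum.delta' cong: if_cong)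
  define F' where "F' k = F k - skew_mult \<sigma> \<delta> G0 ?X k" for k
  have bF': "bounded (Suc m) F'"
    unfolding bounded_def
  proof (intro allI impI)
    fix k assume k: "Suc m \<le> k"
    show "F' k = 0"
    proof (cases "k = Suc m")
      case True then show ?thesis using xm_top[of m a] by (simp add: F'_def P0 f_def)
    next
      case False
      then have "Suc (Suc m) \<le> k" using k by simp
      then show ?thesis using xm_top[of m a] Suc.prems unfolding bounded_def F'_def P0 by simp
    qed
  qed
  obtain G' c where G': "bounded m G'" "(\<lambda>k. F' k - (if k = 0 then c else 0)) = skew_mult \<sigma> \<delta> G' ?X"
    using Suc.IH[OF bF'] by blast
  define G where "G i = G' i + G0 i" for i
  have bG: "bounded (Suc m) G" using G'(1) bG0 unfolding bounded_def G_def by simp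
  have "skew_mult \<sigma> \<delta> G ?X = (\<lambda>k. skew_mult \<sigma> \<delta> G' ?X k + skew_mult \<sigma> \<delta> G0 ?X k)"
    unfolding G_def by (rule skew_mult_addL[OF bounded_mono[OF G'(1), of "Suc m"] bG0]) simp
  also have "\<dots> = (\<lambda>k. F k - (if k = 0 then c else 0))"
    unfolding G'(2)[symmetric] F'_def by simp
  finally show ?case using bG by metis
qed

lemma divide_unique:
  assumes "spoly G" "bounded N F"
    "(\<lambda>k. F k - (if k = 0 then c else 0)) = skew_mult \<sigma> \<delta> G (x_minus a)"
  shows "c = D_eval \<sigma> \<delta> F a 1"
proof -
  obtain M where M: "bounded M G" using spoly_bounded[OF assms(1)] by blast
  have bF: "bounded (Suc N) F" using assms(2) bounded_mono by fastforce
  have bC: "bounded (Suc N) (\<lambda>k. if k = 0 then c else 0)" unfolding bounded_def by simp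
  have "D_eval \<sigma> \<delta> (\<lambda>k. F k - (if k = 0 then c else 0)) a 1 = D_eval \<sigma> \<delta> F a 1 - c"
    unfolding D_eval_diffF[OF bF bC] D_eval_bound[OF bC] by (subst sum.lessThan_Suc_shift) simp
  moreover have "D_eval \<sigma> \<delta> (skew_mult \<sigma> \<delta> G (x_minus a)) a 1 = 0"
    unfolding skew_mult_eval[OF M xminus_bounded] xminus_eval using Dop_one D_eval_zero_y[OF M] by simp
  ultimately show ?thesis using assms(3) by simp
qed

lemma eval_eq:
  assumes "bounded N F"
  shows "skew_eval \<sigma> \<delta> F a = D_eval \<sigma> \<delta> F a 1"
  unfolding skew_eval_def
proof (rule the_equality)
  obtain G c where "bounded N G" "(\<lambda>k. F k - (if k = 0 then c else 0)) = skew_mult \<sigma> \<delta> G (x_minus a)"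
    using divide_exist[OF bounded_mono[OF assms, of "Suc N"], where a=a] by auto
  moreover then have "c = D_eval \<sigma> \<delta> F a 1" using divide_unique bounded_spoly assms by blast
  ultimately show "\<exists>G. spoly G \<and> (\<lambda>k. F k - (if k = 0 then D_eval \<sigma> \<delta> F a 1 else 0)) = skew_mult \<sigma> \<delta> G (x_minus a)"
    using bounded_spoly by blast
next
  fix c assume "\<exists>G. spoly G \<and> (\<lambda>k. F k - (if k = 0 then c else 0)) = skew_mult \<sigma> \<delta> G (x_minus a)"
  then show "c = D_eval \<sigma> \<delta> F a 1" using divide_unique assms by blast
qed

end


context sk
begin

abbreviation cj where "cj c b \<equiv> D c b * inverse b"

lemma eval_conj:
  assumes "bounded N F" "b \<noteq> 0"
  shows "skew_eval \<sigma> \<delta> F (cj c b) = D_eval \<sigma> \<delta> F c b * inverse b"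
proof -
  have "D_eval \<sigma> \<delta> F c (1 * b) = D_eval \<sigma> \<delta> F (cj c b) 1 * b" using D_eval_conj[OF assms] .
  then have "D_eval \<sigma> \<delta> F (cj c b) 1 = D_eval \<sigma> \<delta> F c b * inverse b"
    using assms(2) by (simp add: mult.assoc)
  then show ?thesis using eval_eq[OF assms(1)] by simp
qed

lemma root_iff:
  assumes "bounded N F" "b \<noteq> 0"
  shows "skew_eval \<sigma> \<delta> F (cj c b) = 0 \<longleftrightarrow> D_eval \<sigma> \<delta> F c b = 0"
  using eval_conj[OF assms] assms(2) by simp

lemma conj_iff: "p \<in> conj_class \<sigma> \<delta> c \<longleftrightarrow> (\<exists>b. b \<noteq> 0 \<and> p = cj c b)"
  unfolding conj_class_def by auto

lemma cj_one: "cj c 1 = c" by (simp add: Dop_one)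

lemma cj_cj:
  assumes "b \<noteq> 0" "y \<noteq> 0"
  shows "cj (cj c b) y = cj c (y * b)"
proof -
  have "cj c (y * b) = D (cj c b) y * b * (inverse b * inverse y)"
    using Dop_conj[OF assms(1), of c y] assms by (simp add: nonzero_inverse_mult_distrib)
  also have "\<dots> = D (cj c b) y * inverse y"
  proof -
    have "b * (inverse b * inverse y) = inverse y" using assms(1) by (simp add: mult.assoc[symmetric])
    then show ?thesis by (simp add: mult.assoc)
  qed
  finally show ?thesis by simp
qed

lemma conj_self: "c \<in> conj_class \<sigma> \<delta> c"
  unfolding conj_iff using cj_one by (metis one_neq_zero)

lemma conj_trans:
  assumes "p \<in> conj_class \<sigma> \<delta> c" "q \<in> conj_class \<sigma> \<delta> p"
  shows "q \<in> conj_class \<sigma> \<delta> c"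
proof -
  obtain b where b: "b \<noteq> 0" "p = cj c b" using assms(1) conj_iff by blast
  obtain y where y: "y \<noteq> 0" "q = cj p y" using assms(2) conj_iff by blast
  have "q = cj c (y * b)" using cj_cj[OF b(1) y(1)] b y by simp
  moreover have "y * b \<noteq> 0" using b y by simp
  ultimately show ?thesis unfolding conj_iff by blast
qed

lemma conj_sym:
  assumes "p \<in> conj_class \<sigma> \<delta> c"
  shows "c \<in> conj_class \<sigma> \<delta> p"
proof -
  obtain b where b: "b \<noteq> 0" "p = cj c b" using assms conj_iff by blast
  have "cj (cj c b) (inverse b) = cj c (inverse b * b)" by (rule cj_cj[OF b(1)]) (use b(1) in simp)
  then have "cj p (inverse b) = cj c (inverse b * b)" using b(2) by simp
  also have "\<dots> = c" using b(1) cj_one by simp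
  finally show ?thesis unfolding conj_iff using b(1) by (metis inverse_nonzero_iff_nonzero)
qed

lemma conj_common:
  assumes "q \<in> conj_class \<sigma> \<delta> c" "q \<in> conj_class \<sigma> \<delta> d"
  shows "d \<in> conj_class \<sigma> \<delta> c"
  using conj_trans[OF assms(1) conj_sym[OF assms(2)]] .

lemma cj_same:
  assumes "b \<noteq> 0" "y \<noteq> 0" "cj c b = cj c y"
  shows "\<exists>t\<in>Kcent \<sigma> \<delta> c. y = b * t"
proof -
  define t where "t = inverse b * y"
  have bt: "b * t = y" unfolding t_def using assms(1) by (simp add: mult.assoc[symmetric])
  have "D c y = cj c y * y" using assms(2) by (simp add: mult.assoc)
  also have "\<dots> = cj c b * y" using assms(3) by simp
  also have "\<dots> = D c b * t" unfolding t_def by (simp add: mult.assoc)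
  finally have "D c (b * t) = (\<sigma> b * c + \<delta> b) * t" using bt by (simp add: Dop_def)
  then have "\<sigma> b * D c t + \<delta> b * t = \<sigma> b * (c * t) + \<delta> b * t"
    by (simp add: Dop_core algebra_simps)
  then have "\<sigma> b * D c t = \<sigma> b * (c * t)" by simp
  then have "D c t = c * t" using s_nz[OF assms(1)] by simp
  then show ?thesis using bt unfolding Kcent_def by auto
qed

lemma ann:
  "finite P \<Longrightarrow> \<exists>f d. bounded (Suc d) f \<and> f d = 1 \<and> d \<le> card P \<and> (\<forall>p\<in>P. D_eval \<sigma> \<delta> f (fst p) (snd p) = 0)"
proof (induction P rule: finite_induct)
  case empty
  have "bounded (Suc 0) (\<lambda>k. if k = 0 then (1::'a) else 0)" unfolding bounded_def by simp
  then show ?case by fastforce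
next
  case (insert x P)
  then obtain f' d where f': "bounded (Suc d) f'" "f' d = 1" "d \<le> card P"
    "\<forall>p\<in>P. D_eval \<sigma> \<delta> f' (fst p) (snd p) = 0" by blast
  define v where "v = D_eval \<sigma> \<delta> f' (fst x) (snd x)"
  show ?case
  proof (cases "v = 0")
    case True
    then show ?thesis using f' insert(1,2) v_def by (intro exI[of _ f'] exI[of _ d]) auto
  next
    case False
    define q where "q = cj (fst x) v"
    define f where "f = skew_mult \<sigma> \<delta> (x_minus q) f'"
    have rep: "f = (\<lambda>k. - q * f' k + xmul \<sigma> \<delta> f' k)"
      unfolding f_def skew_mult_rep[OF xminus_bounded] by (simp add: numeral_2_eq_2 x_minus_def)
    have bf: "bounded (Suc (Suc d)) f"
      using f' unfolding rep bounded_def xmul_def by (auto simp: s_zero d_zero)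
    have top: "f (Suc d) = 1"
      using f' unfolding rep bounded_def xmul_def by (simp add: s_one d_zero)
    have ev: "D_eval \<sigma> \<delta> f c y = D c (D_eval \<sigma> \<delta> f' c y) - q * D_eval \<sigma> \<delta> f' c y" for c y
      unfolding f_def skew_mult_eval[OF xminus_bounded f'(1)] xminus_eval ..
    have "\<forall>p\<in>insert x P. D_eval \<sigma> \<delta> f (fst p) (snd p) = 0"
    proof
      fix p assume "p \<in> insert x P"
      then show "D_eval \<sigma> \<delta> f (fst p) (snd p) = 0"
      proof
        assume "p = x"
        then have "D_eval \<sigma> \<delta> f (fst p) (snd p) = D (fst x) v - q * v" unfolding ev v_def by simp
        also have "\<dots> = 0" using False unfolding q_def by (simp add: mult.assoc)
        finally show ?thesis .
      next
        assume "p \<in> P"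
        then show ?thesis unfolding ev using f'(4) by (simp add: Dop_zero)
      qed
    qed
    moreover have "Suc d \<le> card (insert x P)" using f'(3) insert(1,2) by simp
    ultimately show ?thesis using bf top by blast
  qed
qed

end


context sk
begin

lemma KB:
  "bounded (Suc m) f \<Longrightarrow> f \<noteq> (\<lambda>_. 0) \<Longrightarrow>
   (\<forall>i<(r::nat). \<forall>j<r. i \<noteq> j \<longrightarrow> c j \<notin> conj_class \<sigma> \<delta> (c i)) \<Longrightarrow>
   (\<forall>j<r. finite (\<gamma> j) \<and> right_indep (Kcent \<sigma> \<delta> (c j)) (\<gamma> j) \<and> (\<forall>b\<in>\<gamma> j. D_eval \<sigma> \<delta> f (c j) b = 0)) \<Longrightarrow>
   (\<Sum>j<r. card (\<gamma> j)) \<le> m"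
proof (induction m arbitrary: f \<gamma>)
  case (0 f \<gamma>)
  show ?case
  proof (rule ccontr)
    assume "\<not> ?case"
    then obtain j0 where j0: "j0 < r" "\<gamma> j0 \<noteq> {}" by (metis le0 sum.neutral lessThan_iff card.empty)
    then obtain b where b: "b \<in> \<gamma> j0" by blast
    have bnz: "b \<noteq> 0" using indep_nz[OF Kcent_divsub] 0(4) j0 b by blast
    have "f 0 \<noteq> 0"
    proof
      assume "f 0 = 0"
      then have "f = (\<lambda>_. 0)" using 0(1) unfolding bounded_def by (metis Suc_le_eq neq0_conv)
      then show False using 0(2) by simp
    qed
    moreover have "D_eval \<sigma> \<delta> f (c j0) b = f 0 * b" unfolding D_eval_bound[OF 0(1)] by simp
    ultimately show False using 0(4) j0 b bnz by simp
  qed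
next
  case (Suc m f \<gamma>)
  show ?case
  proof (cases "\<forall>j<r. \<gamma> j = {}")
    case True then show ?thesis by simp
  next
    case False
    then obtain j0 b where j0: "j0 < r" "b \<in> \<gamma> j0" by blast
    have bnz: "b \<noteq> 0" using indep_nz[OF Kcent_divsub] Suc.prems(4) j0 by blast
    define q where "q = cj (c j0) b"
    have "D_eval \<sigma> \<delta> f (c j0) (1 * b) = D_eval \<sigma> \<delta> f q 1 * b"
      unfolding q_def by (rule D_eval_conj[OF Suc.prems(1) bnz])
    then have fq: "D_eval \<sigma> \<delta> f q 1 = 0" using Suc.prems(4) j0 bnz by simp
    obtain G c0 where G: "bounded (Suc m) G"
      "(\<lambda>k. f k - (if k = 0 then c0 else 0)) = skew_mult \<sigma> \<delta> G (x_minus q)"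
      using divide_exist[OF Suc.prems(1), where a=q] by blast
    have "c0 = 0" using divide_unique[OF bounded_spoly[OF G(1)] Suc.prems(1) G(2)] fq by simp
    then have "(\<lambda>k. f k - (if k = 0 then c0 else 0)) = f" by (intro ext) simp
    then have fG: "f = skew_mult \<sigma> \<delta> G (x_minus q)" using G(2) by simp
    have Gnz: "G \<noteq> (\<lambda>_. 0)" using fG Suc.prems(2) skew_mult_zero by auto
    define L where "L j y = D (c j) y - q * y" for j y
    have linL: "lin (Kcent \<sigma> \<delta> (c j)) (L j)" for j
      unfolding lin_def L_def by (simp add: Dop_add Dop_lin algebra_simps)
    have fL: "D_eval \<sigma> \<delta> f (c j) y = D_eval \<sigma> \<delta> G (c j) (L j y)" for j y
      unfolding fG skew_mult_eval[OF G(1) xminus_bounded] xminus_eval L_def ..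
    define Z where "Z j = (if j = j0 then {b} else {})" for j
    define PR where "PR j B C \<longleftrightarrow> finite B \<and> right_indep (Kcent \<sigma> \<delta> (c j)) B
        \<and> right_span (Kcent \<sigma> \<delta> (c j)) B = right_span (Kcent \<sigma> \<delta> (c j)) (\<gamma> j) \<inter> {v. L j v = 0}
        \<and> finite C \<and> right_indep (Kcent \<sigma> \<delta> (c j)) C
        \<and> right_span (Kcent \<sigma> \<delta> (c j)) C = right_span (Kcent \<sigma> \<delta> (c j)) (L j ` \<gamma> j)
        \<and> card (\<gamma> j) = card B + card C" for j B C
    have "\<forall>j\<in>{..<r}. \<exists>BC. PR j (fst BC) (snd BC)"
    proof
      fix j assume "j \<in> {..<r}"
      then have "finite (\<gamma> j)" "right_indep (Kcent \<sigma> \<delta> (c j)) (\<gamma> j)" using Suc.prems(4) by auto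
      from rank_nullity[OF Kcent_divsub linL this] obtain B C where "PR j B C" unfolding PR_def by blast
      then show "\<exists>BC. PR j (fst BC) (snd BC)" by (intro exI[of _ "(B, C)"]) simp
    qed
    then obtain BC where BCP: "\<forall>j\<in>{..<r}. PR j (fst (BC j)) (snd (BC j))"
      by (rule bchoice[THEN exE]) blast
    have BC: "\<forall>j\<in>{..<r}. finite (fst (BC j)) \<and> right_indep (Kcent \<sigma> \<delta> (c j)) (fst (BC j))
        \<and> right_span (Kcent \<sigma> \<delta> (c j)) (fst (BC j)) = right_span (Kcent \<sigma> \<delta> (c j)) (\<gamma> j) \<inter> {v. L j v = 0}
        \<and> finite (snd (BC j)) \<and> right_indep (Kcent \<sigma> \<delta> (c j)) (snd (BC j))
        \<and> right_span (Kcent \<sigma> \<delta> (c j)) (snd (BC j)) = right_span (Kcent \<sigma> \<delta> (c j)) (L j ` \<gamma> j)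
        \<and> card (\<gamma> j) = card (fst (BC j)) + card (snd (BC j))"
      using BCP unfolding PR_def by blast
    have kerZ: "card (fst (BC j)) \<le> card (Z j)" if j: "j < r" for j
    proof -
      have "fst (BC j) \<subseteq> right_span (Kcent \<sigma> \<delta> (c j)) (Z j)"
      proof
        fix y assume "y \<in> fst (BC j)"
        then have "y \<in> right_span (Kcent \<sigma> \<delta> (c j)) (fst (BC j))" using span_base[OF Kcent_divsub] by blast
        then have Ly: "L j y = 0" using BC j by blast
        show "y \<in> right_span (Kcent \<sigma> \<delta> (c j)) (Z j)"
        proof (cases "y = 0")
          case True then show ?thesis by (simp add: span_zero)
        next
          case False
          have "D (c j) y = q * y" using Ly unfolding L_def by simp
          then have cy: "cj (c j) y = q" using False by (simp add: mult.assoc)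
          show ?thesis
          proof (cases "j = j0")
            case True
            then have "cj (c j0) b = cj (c j0) y" using cy q_def by simp
            then obtain t where t: "t \<in> Kcent \<sigma> \<delta> (c j0)" "y = b * t" using cj_same[OF bnz False] by blast
            have "b \<in> right_span (Kcent \<sigma> \<delta> (c j0)) {b}" using span_base[OF Kcent_divsub] by blast
            then have "y \<in> right_span (Kcent \<sigma> \<delta> (c j0)) {b}" using span_mult[OF Kcent_divsub] t by blast
            then show ?thesis using True Z_def by simp
          next
            case ne: False
            have "q \<in> conj_class \<sigma> \<delta> (c j)" using cy False conj_iff by blast
            moreover have "q \<in> conj_class \<sigma> \<delta> (c j0)" using q_def bnz conj_iff by blast
            ultimately have "c j \<in> conj_class \<sigma> \<delta> (c j0)" using conj_common by blast
            then show ?thesis using Suc.prems(3) j j0(1) ne by blast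
          qed
        qed
      qed
      moreover have "finite (Z j)" unfolding Z_def by simp
      ultimately show ?thesis using steinitz[OF Kcent_divsub] BC j by blast
    qed
    have IH: "(\<Sum>j<r. card (snd (BC j))) \<le> m"
    proof (rule Suc.IH[OF G(1) Gnz Suc.prems(3)], intro allI impI conjI ballI)
      fix j assume j: "j < r"
      show "finite (snd (BC j))" "right_indep (Kcent \<sigma> \<delta> (c j)) (snd (BC j))" using BC j by auto
      fix y assume y: "y \<in> snd (BC j)"
      have "L j ` \<gamma> j \<subseteq> {v. D_eval \<sigma> \<delta> G (c j) v = 0}" using fL Suc.prems(4) j by auto
      then have "right_span (Kcent \<sigma> \<delta> (c j)) (L j ` \<gamma> j) \<subseteq> {v. D_eval \<sigma> \<delta> G (c j) v = 0}"
        by (rule span_minimal[OF ker_subsp[OF D_eval_lin[OF G(1)]]])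
      moreover have "y \<in> right_span (Kcent \<sigma> \<delta> (c j)) (L j ` \<gamma> j)"
        using BC j y span_base[OF Kcent_divsub] by blast
      ultimately show "D_eval \<sigma> \<delta> G (c j) y = 0" by blast
    qed
    have "(\<Sum>j<r. card (\<gamma> j)) = (\<Sum>j<r. card (fst (BC j))) + (\<Sum>j<r. card (snd (BC j)))"
      using BC by (simp add: sum.distrib[symmetric])
    also have "(\<Sum>j<r. card (fst (BC j))) \<le> (\<Sum>j<r. card (Z j))" using kerZ by (intro sum_mono) auto
    also have "(\<Sum>j<r. card (Z j)) = (\<Sum>j<r. if j = j0 then 1 else 0)" by (intro sum.cong) (auto simp: Z_def)
    also have "\<dots> = 1" using j0(1) by (subst sum.delta) auto
    finally show ?thesis using IH by simp
  qed
qed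

end


context sk
begin

lemma indep_empty: "right_indep K {}"
  unfolding right_indep_def by simp

lemma cl_sup:
  assumes "\<forall>x\<in>X. x \<noteq> 0 \<and> cj c x \<in> S" "u \<in> right_span (Kcent \<sigma> \<delta> c) X" "u \<noteq> 0"
  shows "cj c u \<in> P_closure \<sigma> \<delta> S"
  unfolding P_closure_def
proof (rule CollectI, intro allI impI)
  fix F assume F: "spoly F \<and> (\<forall>b\<in>S. skew_eval \<sigma> \<delta> F b = 0)"
  then obtain N where N: "bounded N F" using spoly_bounded by blast
  have "X \<subseteq> {y. D_eval \<sigma> \<delta> F c y = 0}"
  proof
    fix x assume "x \<in> X"
    then have "x \<noteq> 0" "skew_eval \<sigma> \<delta> F (cj c x) = 0" using assms(1) F by auto
    then show "x \<in> {y. D_eval \<sigma> \<delta> F c y = 0}" using root_iff[OF N] by simp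
  qed
  then have "right_span (Kcent \<sigma> \<delta> c) X \<subseteq> {y. D_eval \<sigma> \<delta> F c y = 0}"
    by (rule span_minimal[OF ker_subsp[OF D_eval_lin[OF N]]])
  then show "skew_eval \<sigma> \<delta> F (cj c u) = 0" using assms(2,3) root_iff[OF N] by auto
qed

lemma cl_sub:
  fixes l :: nat
  assumes fin: "finite S"
    and nc: "\<forall>i<l. \<forall>j<l. i \<noteq> j \<longrightarrow> a j \<notin> conj_class \<sigma> \<delta> (a i)"
    and cov: "S \<subseteq> (\<Union>i<l. conj_class \<sigma> \<delta> (a i))"
    and p: "p \<in> P_closure \<sigma> \<delta> S"
  shows "\<exists>i<l. \<exists>u. u \<noteq> 0 \<and> u \<in> right_span (Kcent \<sigma> \<delta> (a i)) {x. x \<noteq> 0 \<and> cj (a i) x \<in> S} \<and> p = cj (a i) u"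
proof (rule ccontr)
  assume nconc: "\<not> ?thesis"
  let ?K = "\<lambda>i. Kcent \<sigma> \<delta> (a i)"
  define R where "R i = {x. x \<noteq> 0 \<and> cj (a i) x \<in> S}" for i
  define rep where "rep i s = (SOME x. x \<noteq> 0 \<and> s = cj (a i) x)" for i s
  define \<rho> where "\<rho> i = rep i ` (S \<inter> conj_class \<sigma> \<delta> (a i))" for i
  have rep: "rep i s \<noteq> 0 \<and> s = cj (a i) (rep i s)" if "s \<in> conj_class \<sigma> \<delta> (a i)" for i s
  proof -
    have "\<exists>x. x \<noteq> 0 \<and> s = cj (a i) x" using that conj_iff by blast
    then show ?thesis unfolding rep_def by (rule someI_ex)
  qed
  have fin\<rho>: "finite (\<rho> i)" for i unfolding \<rho>_def using fin by simp
  have R\<rho>: "R i \<subseteq> right_span (?K i) (\<rho> i)" for i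
  proof
    fix x assume "x \<in> R i"
    then have x: "x \<noteq> 0" "cj (a i) x \<in> S" unfolding R_def by auto
    let ?s = "cj (a i) x"
    have sC: "?s \<in> conj_class \<sigma> \<delta> (a i)" using x(1) conj_iff by blast
    obtain r where rr: "r = rep i ?s" by blast
    have r: "r \<noteq> 0" "?s = cj (a i) r" using rep[OF sC] unfolding rr[symmetric] by blast+
    obtain t where t: "t \<in> ?K i" "x = r * t" using cj_same[OF r(1) x(1)] r(2) by metis
    have "r \<in> \<rho> i" unfolding \<rho>_def rr using x(2) sC by blast
    then have "r * t \<in> right_span (?K i) (\<rho> i)"
      by (rule span_mult[OF Kcent_divsub span_base[OF Kcent_divsub] t(1)])
    then show "x \<in> right_span (?K i) (\<rho> i)" using t(2) by simp
  qed
  define V where "V i = right_span (?K i) (R i)" for i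
  have "\<forall>i\<in>{..<l}. \<exists>B. B \<subseteq> V i \<and> right_indep (?K i) B \<and> finite B \<and> right_span (?K i) B = V i"
  proof
    fix i assume "i \<in> {..<l}"
    have "V i \<subseteq> right_span (?K i) (\<rho> i)" unfolding V_def by (rule span_subset[OF Kcent_divsub R\<rho>])
    from extend_basis[OF Kcent_divsub span_subsp[OF Kcent_divsub] fin\<rho> this[unfolded V_def], of "{}"]
    show "\<exists>B. B \<subseteq> V i \<and> right_indep (?K i) B \<and> finite B \<and> right_span (?K i) B = V i"
      using indep_empty unfolding V_def by auto
  qed
  then obtain \<beta> where \<beta>: "\<forall>i\<in>{..<l}. \<beta> i \<subseteq> V i \<and> right_indep (?K i) (\<beta> i) \<and> finite (\<beta> i) \<and> right_span (?K i) (\<beta> i) = V i"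
    by (rule bchoice[THEN exE]) blast
  define P where "P = (\<Union>i<l. (\<lambda>b. (a i, b)) ` \<beta> i)"
  have finP: "finite P" unfolding P_def using \<beta> by auto
  have cardP: "card P \<le> (\<Sum>i<l. card (\<beta> i))"
  proof -
    have "card P \<le> (\<Sum>i<l. card ((\<lambda>b. (a i, b)) ` \<beta> i))" unfolding P_def by (rule card_UN_le) simp
    also have "\<dots> \<le> (\<Sum>i<l. card (\<beta> i))" by (intro sum_mono card_image_le) (use \<beta> in auto)
    finally show ?thesis .
  qed
  obtain f d where f: "bounded (Suc d) f" "f d = 1" "d \<le> card P" "\<forall>q\<in>P. D_eval \<sigma> \<delta> f (fst q) (snd q) = 0"
    using ann[OF finP] by blast
  have fnz: "f \<noteq> (\<lambda>_. 0)" using f(2) by auto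
  have \<beta>V: "\<And>i. i < l \<Longrightarrow> \<beta> i \<subseteq> V i" and \<beta>ind: "\<And>i. i < l \<Longrightarrow> right_indep (?K i) (\<beta> i)"
    and \<beta>fin: "\<And>i. i < l \<Longrightarrow> finite (\<beta> i)" and \<beta>span: "\<And>i. i < l \<Longrightarrow> right_span (?K i) (\<beta> i) = V i"
    using \<beta> by auto
  have killV: "D_eval \<sigma> \<delta> f (a i) y = 0" if i: "i < l" and y: "y \<in> V i" for i y
  proof -
    have "\<beta> i \<subseteq> {y. D_eval \<sigma> \<delta> f (a i) y = 0}"
    proof
      fix b assume "b \<in> \<beta> i"
      then have "(a i, b) \<in> P" unfolding P_def using i by blast
      then have "D_eval \<sigma> \<delta> f (fst (a i, b)) (snd (a i, b)) = 0" using f(4) by blast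
      then show "b \<in> {y. D_eval \<sigma> \<delta> f (a i) y = 0}" by simp
    qed
    then have "right_span (?K i) (\<beta> i) \<subseteq> {y. D_eval \<sigma> \<delta> f (a i) y = 0}"
      by (rule span_minimal[OF ker_subsp[OF D_eval_lin[OF f(1)]]])
    then show ?thesis using \<beta>span[OF i] y by blast
  qed
  have "\<forall>s\<in>S. skew_eval \<sigma> \<delta> f s = 0"
  proof
    fix s assume s: "s \<in> S"
    then obtain i where i: "i < l" "s \<in> conj_class \<sigma> \<delta> (a i)" using cov by blast
    then obtain x where x: "x \<noteq> 0" "s = cj (a i) x" using conj_iff by blast
    have "x \<in> R i" unfolding R_def using x s by simp
    then have "x \<in> V i" unfolding V_def by (rule span_base[OF Kcent_divsub])
    then have "D_eval \<sigma> \<delta> f (a i) x = 0" by (rule killV[OF i(1)])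
    then show "skew_eval \<sigma> \<delta> f s = 0" using root_iff[OF f(1) x(1)] x(2) by simp
  qed
  moreover have "\<forall>F. spoly F \<and> (\<forall>b\<in>S. skew_eval \<sigma> \<delta> F b = 0) \<longrightarrow> skew_eval \<sigma> \<delta> F p = 0"
    using p unfolding P_closure_def by simp
  ultimately have fp: "skew_eval \<sigma> \<delta> f p = 0" using bounded_spoly[OF f(1)] by blast
  show False
  proof (cases "\<exists>i<l. p \<in> conj_class \<sigma> \<delta> (a i)")
    case True
    then obtain i0 w where i0: "i0 < l" "w \<noteq> 0" "p = cj (a i0) w" using conj_iff by blast
    have wV: "w \<notin> V i0" using nconc i0 unfolding V_def R_def by blast
    have fw: "D_eval \<sigma> \<delta> f (a i0) w = 0" using fp root_iff[OF f(1) i0(2)] i0(3) by simp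
    define \<gamma> where "\<gamma> = \<beta>(i0 := insert w (\<beta> i0))"
    have "(\<Sum>j<l. card (\<gamma> j)) \<le> d"
    proof (rule KB[OF f(1) fnz nc], intro allI impI conjI ballI)
      fix j assume j: "j < l"
      show "finite (\<gamma> j)" using \<beta>fin[OF j] \<beta>fin[OF i0(1)] \<gamma>_def by simp
      show "right_indep (?K j) (\<gamma> j)"
        using \<beta>ind[OF j] indep_insert[OF Kcent_divsub \<beta>ind[OF i0(1)]] wV \<beta>span[OF i0(1)] \<gamma>_def by auto
      fix y assume "y \<in> \<gamma> j"
      then show "D_eval \<sigma> \<delta> f (a j) y = 0" using killV[OF j] \<beta>V[OF j] fw \<gamma>_def
        by (cases "j = i0") auto
    qed
    moreover have "(\<Sum>j<l. card (\<gamma> j)) = (\<Sum>j<l. card (\<beta> j) + (if j = i0 then 1 else 0))"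
    proof (rule sum.cong[OF refl])
      fix j assume "j \<in> {..<l}"
      show "card (\<gamma> j) = card (\<beta> j) + (if j = i0 then 1 else 0)"
      proof -
        have "w \<notin> \<beta> i0" using wV \<beta>V[OF i0(1)] by blast
        then show ?thesis using \<beta>fin[OF i0(1)] \<gamma>_def by auto
      qed
    qed
    moreover have "(\<Sum>j<l. card (\<beta> j) + (if j = i0 then 1 else 0)) = (\<Sum>j<l. card (\<beta> j)) + 1"
      using i0(1) by (simp add: sum.distrib)
    ultimately show False using f(3) cardP by simp
  next
    case False
    define c' where "c' = a(l := p)"
    define \<gamma> where "\<gamma> = \<beta>(l := {1})"
    have nc': "\<forall>i<Suc l. \<forall>j<Suc l. i \<noteq> j \<longrightarrow> c' j \<notin> conj_class \<sigma> \<delta> (c' i)"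
    proof (intro allI impI)
      fix i j assume ij: "i < Suc l" "j < Suc l" "i \<noteq> j"
      show "c' j \<notin> conj_class \<sigma> \<delta> (c' i)"
      proof (cases "i = l")
        case True
        then have "j < l" using ij by simp
        then show ?thesis using False True conj_sym unfolding c'_def by auto
      next
        case il: False
        show ?thesis
        proof (cases "j = l")
          case True then show ?thesis using False il ij unfolding c'_def by auto
        next
          case False then show ?thesis using nc il ij unfolding c'_def by auto
        qed
      qed
    qed
    have "(\<Sum>j<Suc l. card (\<gamma> j)) \<le> d"
    proof (rule KB[OF f(1) fnz nc'], intro allI impI conjI ballI)
      fix j assume j: "j < Suc l"
      show "finite (\<gamma> j)" using \<beta>fin j \<gamma>_def by (cases "j = l") auto
      show "right_indep (Kcent \<sigma> \<delta> (c' j)) (\<gamma> j)"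
        using \<beta>ind j indep_single[OF Kcent_divsub] \<gamma>_def c'_def by (cases "j = l") auto
      fix y assume y: "y \<in> \<gamma> j"
      show "D_eval \<sigma> \<delta> f (c' j) y = 0"
      proof (cases "j = l")
        case True then show ?thesis using y fp eval_eq[OF f(1)] \<gamma>_def c'_def by auto
      next
        case False
        then have jl: "j < l" using j by simp
        then have "y \<in> V j" using y \<beta>V[OF jl] \<gamma>_def False by auto
        then show ?thesis using killV[OF jl] False c'_def by simp
      qed
    qed
    moreover have "(\<Sum>j<Suc l. card (\<gamma> j)) = (\<Sum>j<l. card (\<beta> j)) + 1"
      unfolding \<gamma>_def by simp
    ultimately show False using f(3) cardP by simp
  qed
qed

end


context sk
begin

lemma cl_mono: "A \<subseteq> B \<Longrightarrow> P_closure \<sigma> \<delta> A \<subseteq> P_closure \<sigma> \<delta> B"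
  unfolding P_closure_def by blast

lemma rk:
  fixes l :: nat
  assumes nc: "\<forall>i<l. \<forall>j<l. i \<noteq> j \<longrightarrow> a j \<notin> conj_class \<sigma> \<delta> (a i)"
    and W: "\<forall>i<l. subsp (Kcent \<sigma> \<delta> (a i)) (W i) \<and> finite (X i) \<and> W i \<subseteq> right_span (Kcent \<sigma> \<delta> (a i)) (X i)"
    and T: "T = (\<Union>i<l. (\<lambda>w. cj (a i) w) ` (W i - {0}))"
  shows "Rk \<sigma> \<delta> T = (\<Sum>i<l. right_dim (Kcent \<sigma> \<delta> (a i)) (W i))"
proof -
  let ?K = "\<lambda>i. Kcent \<sigma> \<delta> (a i)"
  let ?C = "\<lambda>i. conj_class \<sigma> \<delta> (a i)"
  have Ksub: "\<And>i. divsub (?K i)" by (rule Kcent_divsub)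
  have Wsub: "\<And>i. i < l \<Longrightarrow> subsp (?K i) (W i)" and Xfin: "\<And>i. i < l \<Longrightarrow> finite (X i)"
    and WX: "\<And>i. i < l \<Longrightarrow> W i \<subseteq> right_span (?K i) (X i)" using W by auto
  have cls: "i = j" if "i < l" "j < l" "s \<in> ?C i" "s \<in> ?C j" for i j s
    using conj_common[OF that(3,4)] nc that(1,2) by blast
  have disj: "i = j" if "i < l" "j < l" "u \<noteq> 0" "w \<noteq> 0" "cj (a i) u = cj (a j) w" for i j u w
  proof -
    have "cj (a i) u \<in> ?C i" using that(3) conj_iff by blast
    moreover have "cj (a i) u \<in> ?C j" using that(4,5) conj_iff by metis
    ultimately show ?thesis by (rule cls[OF that(1,2)])
  qed
  have inT: "\<exists>i<l. \<exists>w. w \<in> W i \<and> w \<noteq> 0 \<and> t = cj (a i) w" if tT: "t \<in> T" for t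
  proof -
    obtain i where i: "i \<in> {..<l}" "t \<in> (\<lambda>w. cj (a i) w) ` (W i - {0})" using tT[unfolded T] by (rule UN_E)
    obtain w where "w \<in> W i - {0}" "t = cj (a i) w" using i(2) by (rule imageE)
    then show ?thesis using i(1) by blast
  qed
  have memT: "cj (a i) w \<in> T" if "i < l" "w \<in> W i" "w \<noteq> 0" for i w
  proof -
    have "cj (a i) w \<in> (\<lambda>w. cj (a i) w) ` (W i - {0})" using that(2,3) by simp
    then show ?thesis unfolding T using that(1) by (intro UN_I[of i]) simp_all
  qed
  have Tcov: "T \<subseteq> (\<Union>i<l. ?C i)"
  proof
    fix t assume "t \<in> T"
    then obtain i w where iw: "i < l" "w \<in> W i" "w \<noteq> 0" "t = cj (a i) w" using inT by blast
    then have "t \<in> ?C i" using conj_iff by blast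
    then show "t \<in> (\<Union>i<l. ?C i)" using iw(1) by blast
  qed
  have card_basis: "card B = (\<Sum>i<l. right_dim (?K i) (W i))" if PB: "P_basis \<sigma> \<delta> B T" for B
  proof -
    have BT: "B \<subseteq> T" and Bind: "P_independent \<sigma> \<delta> B" and Bcl: "P_closure \<sigma> \<delta> B = T"
      using PB unfolding P_basis_def by auto
    define Bi where "Bi i = B \<inter> ?C i" for i
    define r where "r i s = (SOME x. x \<in> W i \<and> x \<noteq> 0 \<and> s = cj (a i) x)" for i s
    have r0: "r i s \<in> W i \<and> r i s \<noteq> 0 \<and> s = cj (a i) (r i s)" if i: "i < l" and s: "s \<in> Bi i" for i s
    proof -
      obtain j w where jw: "j < l" "w \<in> W j" "w \<noteq> 0" "s = cj (a j) w" using inT s BT Bi_def by blast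
      obtain y where y: "y \<noteq> 0" "s = cj (a i) y" using s Bi_def conj_iff by blast
      have "j = i" using disj[OF jw(1) i jw(3) y(1)] jw(4) y(2) by simp
      then have "\<exists>x. x \<in> W i \<and> x \<noteq> 0 \<and> s = cj (a i) x" using jw(2,3,4) by blast
      then show ?thesis unfolding r_def by (rule someI_ex)
    qed
    have r: "r i s \<in> W i" "r i s \<noteq> 0" "cj (a i) (r i s) = s" if "i < l" "s \<in> Bi i" for i s
      using r0[OF that] by auto
    define \<beta> where "\<beta> i = r i ` Bi i" for i
    have inj: "inj_on (r i) (Bi i)" if "i < l" for i
    proof (rule inj_onI)
      fix s s' assume "s \<in> Bi i" "s' \<in> Bi i" "r i s = r i s'"
      then show "s = s'" using r(3)[OF that \<open>s \<in> Bi i\<close>] r(3)[OF that \<open>s' \<in> Bi i\<close>] by metis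
    qed
    have \<beta>W: "\<beta> i \<subseteq> W i" if "i < l" for i using r[OF that] \<beta>_def by auto
    have \<beta>ind: "right_indep (?K i) (\<beta> i)" if i: "i < l" for i
    proof (rule ccontr)
      assume "\<not> right_indep (?K i) (\<beta> i)"
      then obtain x where x: "x \<in> \<beta> i" "x \<in> right_span (?K i) (\<beta> i - {x})" using indep_dep[OF Ksub] by blast
      then obtain s where s: "s \<in> Bi i" "x = r i s" unfolding \<beta>_def by blast
      have "\<forall>y\<in>\<beta> i - {x}. y \<noteq> 0 \<and> cj (a i) y \<in> B - {s}"
      proof
        fix y assume y: "y \<in> \<beta> i - {x}"
        then obtain s' where s': "s' \<in> Bi i" "y = r i s'" unfolding \<beta>_def by blast
        have "s' \<noteq> s" using y s s' by blast
        then show "y \<noteq> 0 \<and> cj (a i) y \<in> B - {s}" using r[OF i s'(1)] s'(1) Bi_def s'(2) by auto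
      qed
      moreover have xnz: "x \<noteq> 0" using s(2) r(2)[OF i s(1)] by simp
      ultimately have "cj (a i) x \<in> P_closure \<sigma> \<delta> (B - {s})" using cl_sup x(2) by blast
      moreover have "cj (a i) x = s" using s(2) r(3)[OF i s(1)] by simp
      ultimately have "s \<in> P_closure \<sigma> \<delta> (B - {s})" by simp
      moreover have "s \<in> B" using s Bi_def by blast
      ultimately show False using Bind unfolding P_independent_def by blast
    qed
    have \<beta>fin: "finite (\<beta> i)" if "i < l" for i
      using steinitz[OF Ksub Xfin[OF that] \<beta>ind[OF that]] \<beta>W[OF that] WX[OF that] by blast
    have Bifin: "finite (Bi i)" if "i < l" for i
      using \<beta>fin[OF that] finite_image_iff[OF inj[OF that]] unfolding \<beta>_def by simp
    have Bun: "B = (\<Union>i<l. Bi i)" using BT Tcov Bi_def by blast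
    have Bfin: "finite B" using Bun Bifin by simp
    have Bcov: "B \<subseteq> (\<Union>i<l. ?C i)" using BT Tcov by blast
    have \<beta>span: "right_span (?K i) (\<beta> i) = W i" if i: "i < l" for i
    proof
      show "right_span (?K i) (\<beta> i) \<subseteq> W i" by (rule span_minimal[OF Wsub[OF i] \<beta>W[OF i]])
    next
      show "W i \<subseteq> right_span (?K i) (\<beta> i)"
      proof
        fix w assume w: "w \<in> W i"
        show "w \<in> right_span (?K i) (\<beta> i)"
        proof (cases "w = 0")
          case True then show ?thesis by (simp add: span_zero)
        next
          case False
          have "cj (a i) w \<in> P_closure \<sigma> \<delta> B" using memT[OF i w False] Bcl by simp
          from cl_sub[OF Bfin nc Bcov this] obtain j u where ju: "j < l" "u \<noteq> 0"
            "u \<in> right_span (?K j) {x. x \<noteq> 0 \<and> cj (a j) x \<in> B}" "cj (a i) w = cj (a j) u" by blast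
          have ji: "j = i" using disj[OF i ju(1) False ju(2) ju(4)] by simp
          have "{x. x \<noteq> 0 \<and> cj (a i) x \<in> B} \<subseteq> right_span (?K i) (\<beta> i)"
          proof
            fix x assume "x \<in> {x. x \<noteq> 0 \<and> cj (a i) x \<in> B}"
            then have x: "x \<noteq> 0" "cj (a i) x \<in> B" by auto
            have sB: "cj (a i) x \<in> Bi i" using x conj_iff Bi_def by blast
            obtain rr where rr: "rr = r i (cj (a i) x)" by blast
            have rp: "rr \<noteq> 0" "cj (a i) rr = cj (a i) x" using r[OF i sB] unfolding rr[symmetric] by blast+
            obtain t where t: "t \<in> ?K i" "x = rr * t" using cj_same[OF rp(1) x(1) rp(2)] by blast
            have "rr \<in> \<beta> i" using sB rr \<beta>_def by blast
            then have "rr * t \<in> right_span (?K i) (\<beta> i)"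
              by (rule span_mult[OF Ksub span_base[OF Ksub] t(1)])
            then show "x \<in> right_span (?K i) (\<beta> i)" using t(2) by simp
          qed
          then have "u \<in> right_span (?K i) (\<beta> i)" using ju(3) ji span_subset[OF Ksub] by blast
          moreover obtain t where t: "t \<in> ?K i" "w = u * t" using cj_same[OF ju(2) False] ju(4) ji by metis
          ultimately show ?thesis using span_mult[OF Ksub] by simp
        qed
      qed
    qed
    have dimW: "right_dim (?K i) (W i) = card (Bi i)" if i: "i < l" for i
      using dim_eq[OF Ksub \<beta>fin[OF i] \<beta>ind[OF i]] \<beta>span[OF i] card_image[OF inj[OF i]] \<beta>_def by simp
    have "card B = (\<Sum>i<l. card (Bi i))"
      unfolding Bun by (rule card_UN_disjoint) (use Bifin cls Bi_def in auto)
    then show ?thesis using dimW by simp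
  qed
  have "\<forall>i\<in>{..<l}. \<exists>E. E \<subseteq> W i \<and> right_indep (?K i) E \<and> finite E \<and> right_span (?K i) E = W i"
  proof
    fix i assume "i \<in> {..<l}"
    then have i: "i < l" by simp
    from extend_basis[OF Ksub Wsub[OF i] Xfin[OF i] WX[OF i], of "{}"]
    show "\<exists>E. E \<subseteq> W i \<and> right_indep (?K i) E \<and> finite E \<and> right_span (?K i) E = W i"
      using indep_empty by auto
  qed
  then obtain E where E: "\<forall>i\<in>{..<l}. E i \<subseteq> W i \<and> right_indep (?K i) (E i) \<and> finite (E i) \<and> right_span (?K i) (E i) = W i"
    by (rule bchoice[THEN exE]) blast
  have EW: "\<And>i. i < l \<Longrightarrow> E i \<subseteq> W i" and Eind: "\<And>i. i < l \<Longrightarrow> right_indep (?K i) (E i)"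
    and Efin: "\<And>i. i < l \<Longrightarrow> finite (E i)" and Espan: "\<And>i. i < l \<Longrightarrow> right_span (?K i) (E i) = W i"
    using E by auto
  have Enz: "\<And>i e. i < l \<Longrightarrow> e \<in> E i \<Longrightarrow> e \<noteq> 0" using indep_nz[OF Ksub] Eind by blast
  define B0 where "B0 = (\<Union>i<l. (\<lambda>e. cj (a i) e) ` E i)"
  have B0fin: "finite B0" unfolding B0_def using Efin by simp
  have B0T: "B0 \<subseteq> T" unfolding B0_def using memT EW Enz by blast
  have B0cov: "B0 \<subseteq> (\<Union>i<l. ?C i)" using B0T Tcov by blast
  have RB0: "{x. x \<noteq> 0 \<and> cj (a j) x \<in> B0} \<subseteq> W j" if j: "j < l" for j
  proof
    fix x assume "x \<in> {x. x \<noteq> 0 \<and> cj (a j) x \<in> B0}"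
    then obtain i e where ie: "x \<noteq> 0" "i < l" "e \<in> E i" "cj (a j) x = cj (a i) e" unfolding B0_def by blast
    have ij: "i = j" using disj[OF ie(2) j Enz[OF ie(2,3)] ie(1)] ie(4) by simp
    obtain t where "t \<in> ?K j" "x = e * t" using cj_same[OF Enz[OF ie(2,3)] ie(1)] ie(4) ij by metis
    then show "x \<in> W j" using subspD(3)[OF Wsub[OF j]] EW[OF j] ie(3) ij by blast
  qed
  have B0cl: "P_closure \<sigma> \<delta> B0 = T"
  proof
    show "P_closure \<sigma> \<delta> B0 \<subseteq> T"
    proof
      fix p assume "p \<in> P_closure \<sigma> \<delta> B0"
      from cl_sub[OF B0fin nc B0cov this] obtain j u where ju: "j < l" "u \<noteq> 0"
        "u \<in> right_span (?K j) {x. x \<noteq> 0 \<and> cj (a j) x \<in> B0}" "p = cj (a j) u" by blast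
      have "u \<in> W j" using span_minimal[OF Wsub[OF ju(1)] RB0[OF ju(1)]] ju(3) by blast
      then show "p \<in> T" using memT ju by blast
    qed
  next
    show "T \<subseteq> P_closure \<sigma> \<delta> B0"
    proof
      fix t assume "t \<in> T"
      then obtain i w where iw: "i < l" "w \<in> W i" "w \<noteq> 0" "t = cj (a i) w" using inT by blast
      have "\<forall>e\<in>E i. e \<noteq> 0 \<and> cj (a i) e \<in> B0" using Enz iw(1) B0_def by blast
      from cl_sup[OF this _ iw(3)] show "t \<in> P_closure \<sigma> \<delta> B0" using Espan[OF iw(1)] iw by blast
    qed
  qed
  have B0ind: "P_independent \<sigma> \<delta> B0"
    unfolding P_independent_def
  proof (intro ballI notI)
    fix b assume "b \<in> B0" and bcl: "b \<in> P_closure \<sigma> \<delta> (B0 - {b})"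
    then obtain i e where ie: "i < l" "e \<in> E i" "b = cj (a i) e" unfolding B0_def by blast
    have fin': "finite (B0 - {b})" using B0fin by simp
    from cl_sub[OF fin' nc _ bcl] B0cov obtain j u where ju: "j < l" "u \<noteq> 0"
      "u \<in> right_span (?K j) {x. x \<noteq> 0 \<and> cj (a j) x \<in> B0 - {b}}" "b = cj (a j) u" by blast
    have ji: "j = i" using disj[OF ju(1) ie(1) ju(2) Enz[OF ie(1,2)]] ju(4) ie(3) by simp
    have "{x. x \<noteq> 0 \<and> cj (a i) x \<in> B0 - {b}} \<subseteq> right_span (?K i) (E i - {e})"
    proof
      fix x assume "x \<in> {x. x \<noteq> 0 \<and> cj (a i) x \<in> B0 - {b}}"
      then obtain i' e' where x: "x \<noteq> 0" "i' < l" "e' \<in> E i'" "cj (a i) x = cj (a i') e'" "cj (a i) x \<noteq> b"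
        unfolding B0_def by blast
      have ii: "i' = i" using disj[OF x(2) ie(1) Enz[OF x(2,3)] x(1)] x(4) by simp
      have "e' \<noteq> e" using x(4,5) ie(3) ii by blast
      then have "e' \<in> E i - {e}" using x(3) ii by blast
      moreover obtain t where "t \<in> ?K i" "x = e' * t" using cj_same[OF Enz[OF x(2,3)] x(1)] x(4) ii by metis
      ultimately show "x \<in> right_span (?K i) (E i - {e})"
        using span_mult[OF Ksub span_base[OF Ksub]] by blast
    qed
    then have "u \<in> right_span (?K i) (E i - {e})" using ju(3) ji span_subset[OF Ksub] by blast
    moreover obtain t where "t \<in> ?K i" "e = u * t"
      using cj_same[OF ju(2) Enz[OF ie(1,2)]] ju(4) ie(3) ji by metis
    ultimately have "e \<in> right_span (?K i) (E i - {e})" using span_mult[OF Ksub] by simp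
    then show False using indep_notin_span[OF Ksub Eind[OF ie(1)] ie(2)] by blast
  qed
  have ex: "\<exists>B. P_basis \<sigma> \<delta> B T" using B0T B0ind B0cl unfolding P_basis_def by blast
  show ?thesis unfolding Rk_def using card_basis[OF someI_ex[OF ex]] .
qed

end


theorem mainTheorem10:
  fixes \<sigma> \<delta> :: "'a::division_ring \<Rightarrow> 'a"
    and \<Omega> \<A> :: "'a set"
    and l :: nat and a :: "nat \<Rightarrow> 'a" and nn :: "nat \<Rightarrow> nat"
    and pts \<alpha> :: "nat \<Rightarrow> nat \<Rightarrow> 'a" and n :: nat
    and F :: "nat \<Rightarrow> 'a"
  assumes sigma: "ring_endo \<sigma>"
    and delta: "sigma_derivation \<sigma> \<delta>"
    and closed: "P_closed \<sigma> \<delta> \<Omega>"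
    and basis: "P_basis \<sigma> \<delta> \<A> \<Omega>"
    and finA: "finite \<A>"
    and nonconj: "\<forall>i<l. \<forall>j<l. i \<noteq> j \<longrightarrow> a j \<notin> conj_class \<sigma> \<delta> (a i)"
    and cover: "\<A> = (\<Union>i<l. \<A> \<inter> conj_class \<sigma> \<delta> (a i))"
    and nonempty: "\<forall>i<l. nn i \<ge> 1"
    and enum: "\<forall>i<l. bij_betw (pts i) {..<nn i} (\<A> \<inter> conj_class \<sigma> \<delta> (a i))"
    and alpha_nz: "\<forall>i<l. \<forall>j<nn i. \<alpha> i j \<noteq> 0"
    and pts_def: "\<forall>i<l. \<forall>j<nn i. pts i j = Dop \<sigma> \<delta> (a i) (\<alpha> i j) * inverse (\<alpha> i j)"
    and n_def: "n = (\<Sum>i<l. nn i)"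
    and degF: "\<forall>k\<ge>n. F k = 0"
  shows "wt_SR l nn (\<lambda>i. Kcent \<sigma> \<delta> (a i)) (\<lambda>i j. D_eval \<sigma> \<delta> F (a i) (\<alpha> i j))
           = skew_wt \<sigma> \<delta> \<Omega> n F"
proof -
  interpret sk \<sigma> \<delta> using sigma delta by unfold_locales
  let ?K = "\<lambda>i. Kcent \<sigma> \<delta> (a i)"
  let ?C = "\<lambda>i. conj_class \<sigma> \<delta> (a i)"
  have Ksub: "\<And>i. divsub (?K i)" by (rule Kcent_divsub)
  have bF: "bounded n F" unfolding bounded_def using degF by blast
  define Lf where "Lf i = D_eval \<sigma> \<delta> F (a i)" for i
  define Xs where "Xs i = \<alpha> i ` {..<nn i}" for i
  define U where "U i = right_span (?K i) (Xs i)" for i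
  define W where "W i = U i \<inter> {u. Lf i u = 0}" for i
  have linL: "lin (?K i) (Lf i)" for i unfolding Lf_def by (rule D_eval_lin[OF bF])
  have Xfin: "finite (Xs i)" for i unfolding Xs_def by simp
  have AB: "\<A> \<subseteq> \<Omega>" "P_independent \<sigma> \<delta> \<A>" "P_closure \<sigma> \<delta> \<A> = \<Omega>"
    using basis unfolding P_basis_def by auto
  have Acov: "\<A> \<subseteq> (\<Union>i<l. ?C i)" using cover by blast
  have ptsc: "pts i j = cj (a i) (\<alpha> i j)" if "i < l" "j < nn i" for i j using pts_def that by blast
  have Aimg: "\<A> \<inter> ?C i = (\<lambda>j. cj (a i) (\<alpha> i j)) ` {..<nn i}" if i: "i < l" for i
  proof -
    have "\<A> \<inter> ?C i = pts i ` {..<nn i}" using enum i bij_betw_imp_surj_on by metis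
    also have "\<dots> = (\<lambda>j. cj (a i) (\<alpha> i j)) ` {..<nn i}" using ptsc[OF i] by (intro image_cong) auto
    finally show ?thesis .
  qed
  have ptsinj: "inj_on (pts i) {..<nn i}" if "i < l" for i using enum that bij_betw_imp_inj_on by blast
  have ptsA: "pts i j \<in> \<A>" if "i < l" "j < nn i" for i j
    using enum that bij_betw_imp_surj_on by fastforce
  have \<alpha>inj: "inj_on (\<alpha> i) {..<nn i}" if i: "i < l" for i
  proof (rule inj_onI)
    fix j j' assume "j \<in> {..<nn i}" "j' \<in> {..<nn i}" "\<alpha> i j = \<alpha> i j'"
    then have "pts i j = pts i j'" using ptsc[OF i] by simp
    then show "j = j'" using inj_onD[OF ptsinj[OF i]] \<open>j \<in> _\<close> \<open>j' \<in> _\<close> by blast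
  qed
  have cardX: "card (Xs i) = nn i" if "i < l" for i unfolding Xs_def using card_image[OF \<alpha>inj[OF that]] by simp
  have Xnz: "x \<noteq> 0" if "i < l" "x \<in> Xs i" for i x using that alpha_nz unfolding Xs_def by auto
  have Xind: "right_indep (?K i) (Xs i)" if i: "i < l" for i
  proof (rule ccontr)
    assume "\<not> right_indep (?K i) (Xs i)"
    then obtain x where x: "x \<in> Xs i" "x \<in> right_span (?K i) (Xs i - {x})" using indep_dep[OF Ksub] by blast
    then obtain j0 where j0: "j0 < nn i" "x = \<alpha> i j0" unfolding Xs_def by blast
    have "\<forall>y\<in>Xs i - {x}. y \<noteq> 0 \<and> cj (a i) y \<in> \<A> - {pts i j0}"
    proof
      fix y assume y: "y \<in> Xs i - {x}"
      then obtain j where j: "j < nn i" "y = \<alpha> i j" unfolding Xs_def by blast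
      have "j \<noteq> j0" using y j j0 by blast
      then have "pts i j \<noteq> pts i j0" using inj_onD[OF ptsinj[OF i]] j(1) j0(1) by blast
      moreover have "y \<noteq> 0" using Xnz[OF i] y by blast
      moreover have "cj (a i) y = pts i j" using ptsc[OF i j(1)] j(2) by simp
      ultimately show "y \<noteq> 0 \<and> cj (a i) y \<in> \<A> - {pts i j0}" using ptsA[OF i j(1)] by simp
    qed
    from cl_sup[OF this x(2) Xnz[OF i x(1)]]
    have "pts i j0 \<in> P_closure \<sigma> \<delta> (\<A> - {pts i j0})" using ptsc[OF i j0(1)] j0(2) by simp
    then show False using AB(2) ptsA[OF i j0(1)] unfolding P_independent_def by blast
  qed
  have Omega: "\<Omega> = (\<Union>i<l. (\<lambda>w. cj (a i) w) ` (U i - {0}))"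
  proof
    show "\<Omega> \<subseteq> (\<Union>i<l. (\<lambda>w. cj (a i) w) ` (U i - {0}))"
    proof
      fix p assume "p \<in> \<Omega>"
      then have "p \<in> P_closure \<sigma> \<delta> \<A>" using AB(3) by simp
      from cl_sub[OF finA nonconj Acov this] obtain i u where iu: "i < l" "u \<noteq> 0"
        "u \<in> right_span (?K i) {x. x \<noteq> 0 \<and> cj (a i) x \<in> \<A>}" "p = cj (a i) u" by blast
      have "{x. x \<noteq> 0 \<and> cj (a i) x \<in> \<A>} \<subseteq> U i"
      proof
        fix x assume "x \<in> {x. x \<noteq> 0 \<and> cj (a i) x \<in> \<A>}"
        then have x: "x \<noteq> 0" "cj (a i) x \<in> \<A>" by auto
        then have "cj (a i) x \<in> \<A> \<inter> ?C i" using conj_iff by blast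
        then have "cj (a i) x \<in> (\<lambda>j. cj (a i) (\<alpha> i j)) ` {..<nn i}" using Aimg[OF iu(1)] by simp
        then obtain j where j: "j \<in> {..<nn i}" "cj (a i) x = cj (a i) (\<alpha> i j)" by (rule imageE)
        have anz: "\<alpha> i j \<noteq> 0" using alpha_nz iu(1) j(1) by simp
        obtain t where t: "t \<in> ?K i" "x = \<alpha> i j * t" using cj_same[OF anz x(1) j(2)[symmetric]] by blast
        have "\<alpha> i j \<in> Xs i" unfolding Xs_def using j(1) by simp
        then have "\<alpha> i j \<in> U i" unfolding U_def by (rule span_base[OF Ksub])
        then show "x \<in> U i" unfolding U_def using span_mult[OF Ksub _ t(1)] t(2) by simp
      qed
      then have "u \<in> U i" using span_minimal[OF span_subsp[OF Ksub]] iu(3) unfolding U_def by blast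
      then show "p \<in> (\<Union>i<l. (\<lambda>w. cj (a i) w) ` (U i - {0}))" using iu by blast
    qed
  next
    show "(\<Union>i<l. (\<lambda>w. cj (a i) w) ` (U i - {0})) \<subseteq> \<Omega>"
    proof
      fix p assume "p \<in> (\<Union>i<l. (\<lambda>w. cj (a i) w) ` (U i - {0}))"
      then obtain i u where iu: "i < l" "u \<in> U i" "u \<noteq> 0" "p = cj (a i) u" by blast
      have "\<forall>x\<in>Xs i. x \<noteq> 0 \<and> cj (a i) x \<in> \<A>"
        using Xnz[OF iu(1)] ptsA[OF iu(1)] ptsc[OF iu(1)] unfolding Xs_def by auto
      from cl_sup[OF this _ iu(3)] iu(2) have "cj (a i) u \<in> P_closure \<sigma> \<delta> \<A>" unfolding U_def by blast
      then show "p \<in> \<Omega>" using AB(3) iu(4) by simp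
    qed
  qed
  have Teq: "skew_zeros \<sigma> \<delta> F \<inter> \<Omega> = (\<Union>i<l. (\<lambda>w. cj (a i) w) ` (W i - {0}))"
  proof
    show "skew_zeros \<sigma> \<delta> F \<inter> \<Omega> \<subseteq> (\<Union>i<l. (\<lambda>w. cj (a i) w) ` (W i - {0}))"
    proof
      fix p assume p: "p \<in> skew_zeros \<sigma> \<delta> F \<inter> \<Omega>"
      then obtain i u where iu: "i < l" "u \<in> U i" "u \<noteq> 0" "p = cj (a i) u" using Omega by blast
      have "skew_eval \<sigma> \<delta> F p = 0" using p unfolding skew_zeros_def by blast
      then have "Lf i u = 0" using root_iff[OF bF iu(3)] iu(4) unfolding Lf_def by simp
      then have "u \<in> W i" using iu(2) W_def by blast
      then show "p \<in> (\<Union>i<l. (\<lambda>w. cj (a i) w) ` (W i - {0}))" using iu by blast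
    qed
  next
    show "(\<Union>i<l. (\<lambda>w. cj (a i) w) ` (W i - {0})) \<subseteq> skew_zeros \<sigma> \<delta> F \<inter> \<Omega>"
    proof
      fix p assume "p \<in> (\<Union>i<l. (\<lambda>w. cj (a i) w) ` (W i - {0}))"
      then obtain i u where iu: "i < l" "u \<in> W i" "u \<noteq> 0" "p = cj (a i) u" by blast
      have "p \<in> \<Omega>" using Omega iu W_def by blast
      moreover have "Lf i u = 0" using iu(2) W_def by blast
      then have "skew_eval \<sigma> \<delta> F p = 0" using root_iff[OF bF iu(3)] iu(4) unfolding Lf_def by simp
      ultimately show "p \<in> skew_zeros \<sigma> \<delta> F \<inter> \<Omega>" unfolding skew_zeros_def by blast
    qed
  qed
  have Wprops: "\<forall>i<l. subsp (?K i) (W i) \<and> finite (Xs i) \<and> W i \<subseteq> right_span (?K i) (Xs i)"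
    unfolding W_def U_def using subsp_inter[OF span_subsp[OF Ksub] ker_subsp[OF linL]] Xfin by blast
  have Rk: "Rk \<sigma> \<delta> (skew_zeros \<sigma> \<delta> F \<inter> \<Omega>) = (\<Sum>i<l. right_dim (?K i) (W i))"
    by (rule rk[OF nonconj Wprops Teq])
  have dims: "right_dim (?K i) (W i) + right_dim (?K i) (right_span (?K i) {D_eval \<sigma> \<delta> F (a i) (\<alpha> i j) | j. j < nn i}) = nn i"
    if i: "i < l" for i
  proof -
    obtain B C where BC: "finite B" "right_indep (?K i) B" "right_span (?K i) B = right_span (?K i) (Xs i) \<inter> {v. Lf i v = 0}"
      "finite C" "right_indep (?K i) C" "right_span (?K i) C = right_span (?K i) (Lf i ` Xs i)"
      "card (Xs i) = card B + card C"
      using rank_nullity[OF Ksub linL Xfin Xind[OF i]] by blast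
    have "{D_eval \<sigma> \<delta> F (a i) (\<alpha> i j) | j. j < nn i} = Lf i ` Xs i" unfolding Lf_def Xs_def by auto
    then have "right_dim (?K i) (right_span (?K i) {D_eval \<sigma> \<delta> F (a i) (\<alpha> i j) | j. j < nn i}) = card C"
      using dim_eq[OF Ksub BC(4,5)] BC(6) by simp
    moreover have "right_dim (?K i) (W i) = card B"
      using dim_eq[OF Ksub BC(1,2)] BC(3) unfolding W_def U_def by simp
    ultimately show ?thesis using BC(7) cardX[OF i] by simp
  qed
  have "skew_wt \<sigma> \<delta> \<Omega> n F = (\<Sum>i<l. nn i) - (\<Sum>i<l. right_dim (?K i) (W i))"
    unfolding skew_wt_def Rk n_def ..
  also have "(\<Sum>i<l. nn i) = (\<Sum>i<l. right_dim (?K i) (W i)) +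
      (\<Sum>i<l. right_dim (?K i) (right_span (?K i) {D_eval \<sigma> \<delta> F (a i) (\<alpha> i j) | j. j < nn i}))"
    using dims by (simp add: sum.distrib[symmetric])
  finally show ?thesis unfolding wt_SR_def by simp
qed


end
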